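(* Let $M\cong\prec a_1,\ldots,a_m\succ$ and $N\cong\prec b_1,\ldots,b_n\succ$ be integral lattices relative to good BONGs, with $n\ge3$ odd and $m\ge n+1$. Suppose $R_{n-1}=-2e$ and $R_n=0$. If $\alpha_n=1$ and $d[-a_na_{n+1}]=1-R_{n+1}$, then $R_{n+1}-S_n+d[-a_{1,n+1}b_{1,n-1}]\le d[a_{1,n}b_{1,n}]$.
   Context: $F$ dyadic local field, $\mathcal O_F$, valuation $\operatorname{ord}$, $e=\operatorname{ord}(2)$, $d(c)=\operatorname{ord}(c^{-1}\mathfrak d(c))$ with quadratic defect $\mathfrak d(c)=\bigcap_{x\in F}(c-x^2)\mathcal O_F$. Integral: $Q(M)\subseteq\mathcal O_F$. BONGs: $x_1,\ldots,x_m\in FM$ is a BONG of $M$ if $x_1\in M$ with $Q(x_1)\mathcal O_F=\mathfrak nM$ and $x_2,\ldots,x_m$ is a BONG of the projection of $M$ onto $(Fx_1)^\perp$; good if $\operatorname{ord}Q(x_i)\le\operatorname{ord}Q(x_{i+2})$; $M\cong\prec a_1,\ldots,a_m\succ$ means $Q(x_i)=a_i$. $R_i=\operatorname{ord}(a_i)$, $S_i=\operatorname{ord}(b_i)$. $a_{i,j}=a_i\cdots a_j$, $a_{i,i-1}=1$, similarly $b_{i,j}$. For $1\le i\le m-1$, $\alpha_i=\min\{T_0,\ldots,T_{m-1}\}$ with $T_0=(R_{i+1}-R_i)/2+e$, $T_j=R_{i+1}-R_j+d(-a_ja_{j+1})$ ($1\le j\le i$), $T_j=R_{j+1}-R_i+d(-a_ja_{j+1})$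 ($i\le j\le m-1$); $\beta_i$ is defined likewise from $N$. For $0\le i-1\le j\le m$, $d[ca_{i,j}]=\min\{d(ca_{i,j}),\alpha_{i-1},\alpha_j\}$ ($\alpha_0,\alpha_m$ omitted). For $0\le i\le m$, $0\le j\le n$: $d[ca_{1,i}b_{1,j}]=\min\{d(ca_{1,i}b_{1,j}),\alpha_i,\beta_j\}$, $\alpha_i$ omitted if $i\in\{0,m\}$, $\beta_j$ omitted if $j\in\{0,n\}$. *)

theory Defs
  imports Complex_Main "HOL-Library.Extended_Real"
begin

text \<open>The field F is the type 'a; ord is the normalized discrete valuation
(its value at 0 is irrelevant; vord sends 0 to infinity).\<close>

definition intO :: "('a::field \<Rightarrow> int) \<Rightarrow> 'a set" where
  "intO ord = {y. y = 0 \<or> ord y \<ge> 0}"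

definition maxP :: "('a::field \<Rightarrow> int) \<Rightarrow> 'a set" where
  "maxP ord = {y. y = 0 \<or> ord y > 0}"

definition vord :: "('a::field \<Rightarrow> int) \<Rightarrow> 'a \<Rightarrow> ereal" where
  "vord ord x = (if x = 0 then \<infinity> else ereal (of_int (ord x)))"

definition dyadic_local_field :: "('a::field \<Rightarrow> int) \<Rightarrow> bool" where
  "dyadic_local_field ord \<longleftrightarrow>
     (\<forall>x y. x \<noteq> 0 \<longrightarrow> y \<noteq> 0 \<longrightarrow> ord (x * y) = ord x + ord y) \<and>
     (\<forall>x y. x \<noteq> 0 \<longrightarrow> y \<noteq> 0 \<longrightarrow> x + y \<noteq> 0 \<longrightarrow> ord (x + y) \<ge> min (ord x) (ord y)) \<and>
     (\<exists>\<pi>. \<pi> \<noteq> 0 \<and> ord \<pi> = 1) \<and>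
     \<comment> \<open>complete w.r.t. the valuation\<close>
     (\<forall>X :: nat \<Rightarrow> 'a. (\<forall>k::int. \<exists>N. \<forall>p\<ge>N. \<forall>q\<ge>N. X p = X q \<or> ord (X p - X q) \<ge> k)
        \<longrightarrow> (\<exists>L. \<forall>k::int. \<exists>N. \<forall>p\<ge>N. X p = L \<or> ord (X p - L) \<ge> k)) \<and>
     \<comment> \<open>finite residue field\<close>
     (\<exists>S. finite S \<and> S \<subseteq> intO ord \<and> (\<forall>x\<in>intO ord. \<exists>s\<in>S. x - s \<in> maxP ord)) \<and>
     \<comment> \<open>dyadic: residue characteristic 2 (and char F = 0)\<close>
     (2::'a) \<noteq> 0 \<and> ord 2 > 0"

definition eram :: "('a::field \<Rightarrow> int) \<Rightarrow> int" where
  "eram ord = ord 2"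

definition qdefect :: "('a::field \<Rightarrow> int) \<Rightarrow> 'a \<Rightarrow> 'a set" where
  "qdefect ord c = (\<Inter>x. {(c - x^2) * y | y. y \<in> intO ord})"

definition ideal_ord :: "('a::field \<Rightarrow> int) \<Rightarrow> 'a set \<Rightarrow> ereal" where
  "ideal_ord ord I = (INF y\<in>I. vord ord y)"

definition dd :: "('a::field \<Rightarrow> int) \<Rightarrow> 'a \<Rightarrow> ereal" where
  "dd ord c = ideal_ord ord (qdefect ord c) - ereal (of_int (ord c))"

text \<open>Vectors: functions nat \<Rightarrow> F supported on {..<k}; bilinear form given by a
symmetric Gram matrix G; Q(x) = B(x,x).\<close>

definition vec_space :: "nat \<Rightarrow> (nat \<Rightarrow> 'a::field) set" where
  "vec_space k = {v. \<forall>i\<ge>k. v i = 0}"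

definition bil :: "(nat \<Rightarrow> nat \<Rightarrow> 'a::field) \<Rightarrow> nat \<Rightarrow> (nat \<Rightarrow> 'a) \<Rightarrow> (nat \<Rightarrow> 'a) \<Rightarrow> 'a" where
  "bil G k x y = (\<Sum>i<k. \<Sum>j<k. x i * G i j * y j)"

definition qf :: "(nat \<Rightarrow> nat \<Rightarrow> 'a::field) \<Rightarrow> nat \<Rightarrow> (nat \<Rightarrow> 'a) \<Rightarrow> 'a" where
  "qf G k x = bil G k x x"

definition quad_space :: "(nat \<Rightarrow> nat \<Rightarrow> 'a::field) \<Rightarrow> nat \<Rightarrow> bool" where
  "quad_space G k \<longleftrightarrow> (\<forall>i j. G i j = G j i)"

definition O_span :: "('a::field \<Rightarrow> int) \<Rightarrow> (nat \<Rightarrow> 'a) list \<Rightarrow> (nat \<Rightarrow> 'a) set" where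
  "O_span ord gs = {(\<lambda>i. \<Sum>j<length gs. c j * (gs ! j) i) | c. \<forall>j. c j \<in> intO ord}"

definition is_lattice :: "('a::field \<Rightarrow> int) \<Rightarrow> nat \<Rightarrow> (nat \<Rightarrow> 'a) set \<Rightarrow> bool" where
  "is_lattice ord k M \<longleftrightarrow> (\<exists>gs. set gs \<subseteq> vec_space k \<and> M = O_span ord gs)"

definition integral :: "('a::field \<Rightarrow> int) \<Rightarrow> (nat \<Rightarrow> nat \<Rightarrow> 'a) \<Rightarrow> nat \<Rightarrow> (nat \<Rightarrow> 'a) set \<Rightarrow> bool" where
  "integral ord G k M \<longleftrightarrow> qf G k ` M \<subseteq> intO ord"

definition norm_ideal :: "('a::field \<Rightarrow> int) \<Rightarrow> (nat \<Rightarrow> nat \<Rightarrow> 'a) \<Rightarrow> nat \<Rightarrow> (nat \<Rightarrow> 'a) set \<Rightarrow> 'a set" where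
  "norm_ideal ord G k M = {\<Sum>j<l. c j * qf G k (y j) | (l::nat) (c::nat \<Rightarrow> 'a) y. (\<forall>j. c j \<in> intO ord) \<and> (\<forall>j<l. y j \<in> M)}"

definition proj :: "(nat \<Rightarrow> nat \<Rightarrow> 'a::field) \<Rightarrow> nat \<Rightarrow> (nat \<Rightarrow> 'a) \<Rightarrow> (nat \<Rightarrow> 'a) \<Rightarrow> (nat \<Rightarrow> 'a)" where
  "proj G k x y = (\<lambda>i. y i - (bil G k x y / qf G k x) * x i)"

primrec is_bong :: "('a::field \<Rightarrow> int) \<Rightarrow> (nat \<Rightarrow> nat \<Rightarrow> 'a) \<Rightarrow> nat \<Rightarrow> (nat \<Rightarrow> 'a) set \<Rightarrow> (nat \<Rightarrow> 'a) list \<Rightarrow> bool" where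
  "is_bong ord G k M [] \<longleftrightarrow> M = {(\<lambda>i. 0)}"
| "is_bong ord G k M (x # xs) \<longleftrightarrow>
     x \<in> M \<and> qf G k x \<noteq> 0 \<and>
     norm_ideal ord G k M = {qf G k x * c | c. c \<in> intO ord} \<and>
     is_bong ord G k (proj G k x ` M) xs"

definition good_bong :: "('a::field \<Rightarrow> int) \<Rightarrow> (nat \<Rightarrow> nat \<Rightarrow> 'a) \<Rightarrow> nat \<Rightarrow> (nat \<Rightarrow> 'a) set \<Rightarrow> (nat \<Rightarrow> 'a) list \<Rightarrow> bool" where
  "good_bong ord G k M xs \<longleftrightarrow> is_bong ord G k M xs \<and>
     (\<forall>i. i + 2 < length xs \<longrightarrow> ord (qf G k (xs ! i)) \<le> ord (qf G k (xs ! (i + 2))))"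

text \<open>M \<cong> \<prec>a_1,...,a_m\<succ> relative to a good BONG (a is 1-indexed).\<close>
definition good_bong_repr :: "('a::field \<Rightarrow> int) \<Rightarrow> (nat \<Rightarrow> nat \<Rightarrow> 'a) \<Rightarrow> nat \<Rightarrow> (nat \<Rightarrow> 'a) set \<Rightarrow> (nat \<Rightarrow> 'a) \<Rightarrow> nat \<Rightarrow> bool" where
  "good_bong_repr ord G k M a m \<longleftrightarrow>
     (\<exists>xs. length xs = m \<and> good_bong ord G k M xs \<and> (\<forall>i\<in>{1..m}. qf G k (xs ! (i - 1)) = a i))"

definition pr :: "(nat \<Rightarrow> 'a::field) \<Rightarrow> nat \<Rightarrow> nat \<Rightarrow> 'a" where
  "pr a i j = (\<Prod>l\<in>{i..j}. a l)"

definition Tterm :: "('a::field \<Rightarrow> int) \<Rightarrow> (nat \<Rightarrow> 'a) \<Rightarrow> nat \<Rightarrow> nat \<Rightarrow> ereal" where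
  "Tterm ord a i j =
     (if j \<le> i then ereal (of_int (ord (a (i+1)) - ord (a j))) + dd ord (- a j * a (j+1))
      else ereal (of_int (ord (a (j+1)) - ord (a i))) + dd ord (- a j * a (j+1)))"

definition alpha :: "('a::field \<Rightarrow> int) \<Rightarrow> (nat \<Rightarrow> 'a) \<Rightarrow> nat \<Rightarrow> nat \<Rightarrow> ereal" where
  "alpha ord a m i = Min (insert (ereal ((of_int (ord (a (i+1))) - of_int (ord (a i))) / 2 + of_int (eram ord)))
                           (Tterm ord a i ` {1..m-1}))"

text \<open>d[c a_{i,j}], with alpha_0, alpha_m omitted.\<close>
definition dA :: "('a::field \<Rightarrow> int) \<Rightarrow> (nat \<Rightarrow> 'a) \<Rightarrow> nat \<Rightarrow> 'a \<Rightarrow> nat \<Rightarrow> nat \<Rightarrow> ereal" where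
  "dA ord a m c i j = Min ({dd ord (c * pr a i j)}
      \<union> (if i - 1 \<notin> {0, m} then {alpha ord a m (i - 1)} else {})
      \<union> (if j \<notin> {0, m} then {alpha ord a m j} else {}))"

text \<open>d[c a_{1,i} b_{1,j}], with alpha_i omitted if i in {0,m}, beta_j omitted if j in {0,n}.\<close>
definition dAB :: "('a::field \<Rightarrow> int) \<Rightarrow> (nat \<Rightarrow> 'a) \<Rightarrow> nat \<Rightarrow> (nat \<Rightarrow> 'a) \<Rightarrow> nat \<Rightarrow> 'a \<Rightarrow> nat \<Rightarrow> nat \<Rightarrow> ereal" where
  "dAB ord a m b n c i j = Min ({dd ord (c * pr a 1 i * pr b 1 j)}
      \<union> (if i \<notin> {0, m} then {alpha ord a m i} else {})
      \<union> (if j \<notin> {0, n} then {alpha ord b n j} else {}))"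

end

theory Submission
  imports Defs
begin

locale dlf = fixes ord :: "'a::field \<Rightarrow> int" assumes F: "dyadic_local_field ord"
begin

lemma ord_mult: "x \<noteq> 0 \<Longrightarrow> y \<noteq> 0 \<Longrightarrow> ord (x*y) = ord x + ord y"
  using F unfolding dyadic_local_field_def by blast

lemma ord_add: "x \<noteq> 0 \<Longrightarrow> y \<noteq> 0 \<Longrightarrow> x + y \<noteq> 0 \<Longrightarrow> min (ord x) (ord y) \<le> ord (x+y)"
  using F unfolding dyadic_local_field_def by blast

lemma pi_ex: "\<exists>p. p \<noteq> 0 \<and> ord p = 1"
  using F unfolding dyadic_local_field_def by blast

lemma two_nz: "(2::'a) \<noteq> 0" and e_pos: "eram ord \<ge> 1"
  using F unfolding dyadic_local_field_def eram_def by auto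

lemma ord_one[simp]: "ord 1 = 0"
  using ord_mult[of 1 1] by simp

lemma ord_m1[simp]: "ord (-1) = 0"
  using ord_mult[of "-1" "-1"] by simp

lemma ord_uminus[simp]: "ord (- x) = ord x"
proof (cases "x = 0")
  case False
  then show ?thesis using ord_mult[of "-1" x] by simp
qed simp

lemma ord_inverse: "x \<noteq> 0 \<Longrightarrow> ord (inverse x) = - ord x"
  using ord_mult[of x "inverse x"] by simp

lemma ord_divide: "x \<noteq> 0 \<Longrightarrow> y \<noteq> 0 \<Longrightarrow> ord (x / y) = ord x - ord y"
  by (simp add: divide_inverse ord_mult ord_inverse)

lemma ord_power: "x \<noteq> 0 \<Longrightarrow> ord (x ^ n) = int n * ord x"
  by (induction n) (auto simp: ord_mult algebra_simps)

definition vo :: "'a \<Rightarrow> ereal" where "vo = vord ord"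

lemma vo_zero[simp]: "vo 0 = \<infinity>" by (simp add: vo_def vord_def)
lemma vo_nz: "x \<noteq> 0 \<Longrightarrow> vo x = ereal (of_int (ord x))" by (simp add: vo_def vord_def)
lemma vo_inf_iff: "vo x = \<infinity> \<longleftrightarrow> x = 0" by (simp add: vo_def vord_def)

lemma vo_mult: "vo (x*y) = vo x + vo y"
  by (cases "x = 0"; cases "y = 0") (auto simp: vo_nz ord_mult)

lemma vo_uminus[simp]: "vo (- x) = vo x"
  by (cases "x = 0") (auto simp: vo_nz)

lemma vo_add: "min (vo x) (vo y) \<le> vo (x+y)"
proof -
  consider "x = 0" | "y = 0" | "x + y = 0" | "x \<noteq> 0" "y \<noteq> 0" "x + y \<noteq> 0" by blast
  then show ?thesis
  proof cases
    case 4 then show ?thesis using ord_add[of x y] by (auto simp: vo_nz min_def)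
  qed auto
qed

lemma vo_diff: "min (vo x) (vo y) \<le> vo (x-y)"
  using vo_add[of x "-y"] by simp

lemma vo_add_ge: "c \<le> vo x \<Longrightarrow> c \<le> vo y \<Longrightarrow> c \<le> vo (x+y)"
  using vo_add[of x y] by (simp add: min_def split: if_splits)

lemma vo_diff_ge: "c \<le> vo x \<Longrightarrow> c \<le> vo y \<Longrightarrow> c \<le> vo (x-y)"
  using vo_add_ge[of c x "-y"] by simp

lemma vo_strict: assumes "vo x < vo y" shows "vo (x + y) = vo x"
proof -
  have a: "vo x \<le> vo (x+y)" using vo_add[of x y] assms by (simp add: min_def split: if_splits)
  have "min (vo (x+y)) (vo y) \<le> vo x" using vo_add[of "x+y" "-y"] by simp
  then have "vo (x+y) \<le> vo x" using assms by (auto simp: min_def split: if_splits)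
  then show ?thesis using a by simp
qed

lemma vo_power: "vo (x ^ n) = ereal (of_nat n) * vo x"
proof (cases "x = 0")
  case True then show ?thesis by (cases n) (auto simp: vo_nz)
next
  case False then show ?thesis by (simp add: vo_nz ord_power)
qed

lemma vo_sq: "vo (x^2) = 2 * vo x"
  using vo_power[of x 2] by simp

lemma intO_iff: "y \<in> intO ord \<longleftrightarrow> 0 \<le> vo y"
  by (cases "y = 0") (auto simp: intO_def vo_nz)

lemma maxP_iff: "y \<in> maxP ord \<longleftrightarrow> 1 \<le> vo y"
  by (cases "y = 0") (auto simp: maxP_def vo_nz)

lemma vo_two: "vo 2 = ereal (of_int (eram ord))"
  using two_nz by (simp add: vo_nz eram_def)

end

definition isint :: "ereal \<Rightarrow> bool" where
  "isint x \<longleftrightarrow> x = \<infinity> \<or> (\<exists>z::int. x = ereal (of_int z))"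

lemma int_min_ex:
  fixes Z :: "int set"
  assumes "Z \<noteq> {}" "\<forall>z\<in>Z. b \<le> z"
  shows "\<exists>z0\<in>Z. \<forall>z\<in>Z. z0 \<le> z"
proof -
  obtain z1 where z1: "z1 \<in> Z" using assms by auto
  define N where "N = {n::nat. b + int n \<in> Z}"
  have "nat (z1 - b) \<in> N" using z1 assms unfolding N_def by auto
  then have ex: "\<exists>n. n \<in> N" by blast
  define n0 where "n0 = (LEAST n. n \<in> N)"
  have n0N: "n0 \<in> N" unfolding n0_def using ex by (metis LeastI)
  show ?thesis
  proof (intro bexI[of _ "b + int n0"] ballI)
    show "b + int n0 \<in> Z" using n0N unfolding N_def by auto
    fix z assume z: "z \<in> Z"
    then have "nat (z - b) \<in> N" using assms unfolding N_def by auto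
    then have "n0 \<le> nat (z - b)" unfolding n0_def by (rule Least_le)
    then show "b + int n0 \<le> z" using assms z by auto
  qed
qed

lemma isint_le_by_thresholds:
  assumes "isint A" "\<And>d::int. ereal (of_int d) \<le> A \<Longrightarrow> ereal (of_int d) \<le> B"
  shows "A \<le> B"
proof -
  consider "A = \<infinity>" | z where "A = ereal (of_int z)" using assms(1) unfolding isint_def by blast
  then show ?thesis
  proof cases
    case 1
    then have all: "\<And>d::int. ereal (of_int d) \<le> B" using assms(2) by simp
    show ?thesis
    proof (cases B)
      case (real r)
      have "ereal (of_int (\<lceil>r\<rceil> + 1)) \<le> B" by (rule all)
      then show ?thesis using real by simp linarith
    next
      case MInf then show ?thesis using all[of 0] by simp
    qed (simp add: 1)
  next
    case 2 then show ?thesis using assms(2)[of z] by simp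
  qed
qed

lemma isint_min: "isint A \<Longrightarrow> isint B \<Longrightarrow> isint (min A B)"
  by (auto simp: min_def)

lemma isint_lt: "isint A \<Longrightarrow> A < ereal (of_int k) \<Longrightarrow> A \<le> ereal (of_int (k - 1))"
  unfolding isint_def by auto

lemma isint_not_le: "isint A \<Longrightarrow> \<not> ereal (of_int k) \<le> A \<Longrightarrow> A \<le> ereal (of_int (k - 1))"
  unfolding isint_def by auto

context dlf begin

definition pr0 where "pr0 = (SOME p. p \<noteq> 0 \<and> ord p = 1)"
lemma pr0: "pr0 \<noteq> 0" "ord pr0 = 1"
  using someI_ex[OF pi_ex] unfolding pr0_def by auto

definition pw :: "int \<Rightarrow> 'a" where
  "pw z = (if 0 \<le> z then pr0 ^ nat z else inverse (pr0 ^ nat (- z)))"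

lemma pw_nz: "pw z \<noteq> 0" using pr0 by (simp add: pw_def)
lemma ord_pw: "ord (pw z) = z" using pr0 by (simp add: pw_def ord_power ord_inverse)

lemma qdef_mem: "y \<in> qdefect ord c \<longleftrightarrow> (\<forall>x. vo (c - x^2) \<le> vo y)"
proof
  assume y: "y \<in> qdefect ord c"
  show "\<forall>x. vo (c - x^2) \<le> vo y"
  proof
    fix x
    from y obtain z where "y = (c - x^2) * z" "z \<in> intO ord" unfolding qdefect_def by blast
    then show "vo (c - x^2) \<le> vo y" by (simp add: vo_mult intO_iff add_increasing2)
  qed
next
  assume h: "\<forall>x. vo (c - x^2) \<le> vo y"
  show "y \<in> qdefect ord c" unfolding qdefect_def
  proof (clarsimp)
    fix x
    show "\<exists>z. y = (c - x^2) * z \<and> z \<in> intO ord"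
    proof (cases "c - x^2 = 0")
      case True
      then have "y = 0" using h[rule_format, of x] by (simp add: vo_inf_iff[symmetric])
      then show ?thesis using True by (auto simp: intO_def)
    next
      case False
      show ?thesis
      proof (cases "y = 0")
        case True then show ?thesis by (auto simp: intO_def)
      next
        case yn: False
        have "ord (c - x^2) \<le> ord y" using h[rule_format, of x] False yn by (simp add: vo_nz)
        then have "y / (c - x^2) \<in> intO ord" using False yn by (simp add: intO_def ord_divide)
        then show ?thesis using False by (intro exI[of _ "y / (c - x^2)"]) simp
      qed
    qed
  qed
qed

lemma ideal_ord_ge: "K \<le> ideal_ord ord I \<longleftrightarrow> (\<forall>y\<in>I. K \<le> vo y)"
  by (simp add: ideal_ord_def vo_def le_INF_iff)

lemma char_io:
  fixes K :: int
  shows "ereal (of_int K) \<le> ideal_ord ord (qdefect ord c) \<longleftrightarrow> (\<exists>x. ereal (of_int K) \<le> vo (c - x^2))"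
proof
  assume "\<exists>x. ereal (of_int K) \<le> vo (c - x^2)"
  then obtain x where x: "ereal (of_int K) \<le> vo (c - x^2)" by blast
  show "ereal (of_int K) \<le> ideal_ord ord (qdefect ord c)"
    unfolding ideal_ord_ge using x qdef_mem by (meson order_trans)
next
  assume a: "ereal (of_int K) \<le> ideal_ord ord (qdefect ord c)"
  show "\<exists>x. ereal (of_int K) \<le> vo (c - x^2)"
  proof (rule ccontr)
    assume "\<not> ?thesis"
    then have lt: "\<And>x. vo (c - x^2) < ereal (of_int K)" by (simp add: not_le)
    have "pw (K - 1) \<in> qdefect ord c"
      unfolding qdef_mem
    proof
      fix x
      have nz: "c - x^2 \<noteq> 0" using lt[of x] by (auto simp: vo_inf_iff[symmetric])
      then have "ord (c - x^2) < K" using lt[of x] by (simp add: vo_nz)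
      then show "vo (c - x^2) \<le> vo (pw (K - 1))" using nz by (simp add: vo_nz pw_nz ord_pw)
    qed
    then have "ereal (of_int K) \<le> vo (pw (K - 1))" using a unfolding ideal_ord_ge by blast
    then show False by (simp add: vo_nz pw_nz ord_pw)
  qed
qed

lemma dd_char:
  fixes d :: int
  assumes "c \<noteq> 0"
  shows "ereal (of_int d) \<le> dd ord c \<longleftrightarrow> (\<exists>x. ereal (of_int (ord c + d)) \<le> vo (c - x^2))"
proof -
  have "ereal (of_int d) \<le> dd ord c \<longleftrightarrow> ereal (of_int (ord c + d)) \<le> ideal_ord ord (qdefect ord c)"
    unfolding dd_def
    by (cases "ideal_ord ord (qdefect ord c)") (auto simp: algebra_simps)
  then show ?thesis using char_io[of "ord c + d" c] by simp
qed

lemma io_isint: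
  assumes "c \<noteq> 0"
  shows "isint (ideal_ord ord (qdefect ord c))"
proof -
  let ?Q = "qdefect ord c"
  have lb: "\<forall>y\<in>?Q. ereal (of_int (ord c)) \<le> vo y"
    using qdef_mem[of _ c] assms by (metis diff_zero power_zero_numeral vo_nz)
  define Z where "Z = {z. \<exists>y\<in>?Q. y \<noteq> 0 \<and> ord y = z}"
  show ?thesis
  proof (cases "Z = {}")
    case True
    then have "\<forall>y\<in>?Q. y = 0" unfolding Z_def by auto
    then have "\<infinity> \<le> ideal_ord ord ?Q" unfolding ideal_ord_ge by (auto simp: vo_inf_iff)
    then show ?thesis unfolding isint_def by simp
  next
    case False
    have "\<forall>z\<in>Z. ord c \<le> z" using lb unfolding Z_def by (auto simp: vo_nz)
    then obtain z0 where z0: "z0 \<in> Z" "\<forall>z\<in>Z. z0 \<le> z" using int_min_ex[OF False] by blast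
    then obtain y0 where y0: "y0 \<in> ?Q" "y0 \<noteq> 0" "ord y0 = z0" unfolding Z_def by blast
    have "ideal_ord ord ?Q \<le> vo y0" unfolding ideal_ord_def vo_def using y0 by (simp add: INF_lower)
    moreover have "ereal (of_int z0) \<le> ideal_ord ord ?Q" unfolding ideal_ord_ge
    proof
      fix y assume "y \<in> ?Q"
      then show "ereal (of_int z0) \<le> vo y" using z0 unfolding Z_def by (cases "y = 0") (auto simp: vo_nz)
    qed
    ultimately have "ideal_ord ord ?Q = ereal (of_int z0)" using y0 by (simp add: vo_nz)
    then show ?thesis unfolding isint_def by blast
  qed
qed

lemma dd_isint: "c \<noteq> 0 \<Longrightarrow> isint (dd ord c)"
  using io_isint[of c] unfolding isint_def dd_def
  by (auto simp del: of_int_diff simp add: of_int_diff[symmetric])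

lemma dd_nonneg: "c \<noteq> 0 \<Longrightarrow> 0 \<le> dd ord c"
proof -
  assume c: "c \<noteq> 0"
  have "ereal (of_int 0) \<le> dd ord c" using dd_char[of c 0] c by (auto intro: exI[of _ 0] simp: vo_nz)
  then show ?thesis by (simp add: zero_ereal_def)
qed

end

context dlf begin

lemma vo_ge_iff: "ereal (of_int K) \<le> vo z \<longleftrightarrow> (z = 0 \<or> K \<le> ord z)"
  by (cases "z = 0") (auto simp: vo_nz)

lemma vo_ge_mult:
  assumes "ereal (of_int K1) \<le> vo z1" "ereal (of_int K2) \<le> vo z2"
  shows "ereal (of_int (K1 + K2)) \<le> vo (z1 * z2)"
  using assms by (cases "z1 = 0"; cases "z2 = 0") (auto simp: vo_nz ord_mult)

lemma vo_ge_mono: "ereal (of_int K1) \<le> vo z \<Longrightarrow> K2 \<le> K1 \<Longrightarrow> ereal (of_int K2) \<le> vo z"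
  by (cases "z = 0") (auto simp: vo_nz)

lemma sq_close_ord:
  assumes "c \<noteq> 0" "ereal (of_int (ord c + 1)) \<le> vo (c - x^2)"
  shows "x \<noteq> 0" "2 * ord x = ord c"
proof -
  have "vo c < vo (c - x^2)" using assms by (cases "c - x^2 = 0") (auto simp: vo_nz)
  then have "vo c < vo (- (c - x^2))" by (simp only: vo_uminus)
  then have "vo (c + - (c - x^2)) = vo c" by (rule vo_strict)
  then have e: "vo (x^2) = vo c" by simp
  then show "x \<noteq> 0" using assms by (auto simp: vo_nz)
  then show "2 * ord x = ord c" using e assms by (simp add: vo_nz ord_power)
qed

lemma dd_odd: assumes "c \<noteq> 0" "odd (ord c)" shows "dd ord c = 0"
proof -
  have "\<not> ereal (of_int 1) \<le> dd ord c"
  proof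
    assume "ereal (of_int 1) \<le> dd ord c"
    then obtain x where "ereal (of_int (ord c + 1)) \<le> vo (c - x^2)" using dd_char[OF assms(1)] by blast
    then have "2 * ord x = ord c" using sq_close_ord assms by blast
    then show False using assms(2) by presburger
  qed
  then have "dd ord c \<le> ereal (of_int 0)" using isint_not_le dd_isint assms(1) by fastforce
  then show ?thesis using dd_nonneg[OF assms(1)] by (simp add: zero_ereal_def)
qed

lemma dd_dom_thr:
  fixes d :: int
  assumes c: "c \<noteq> 0" and c': "c' \<noteq> 0" and h: "ereal (of_int d) \<le> dd ord c" "ereal (of_int d) \<le> dd ord c'"
  shows "ereal (of_int d) \<le> dd ord (c * c')"
proof (cases "d \<le> 0")
  case True
  then show ?thesis using dd_nonneg[of "c*c'"] c c' by (simp add: order_trans[rotated] zero_ereal_def)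
next
  case False
  obtain x where x: "ereal (of_int (ord c + d)) \<le> vo (c - x^2)" using h(1) dd_char[OF c] by blast
  obtain y where y: "ereal (of_int (ord c' + d)) \<le> vo (c' - y^2)" using h(2) dd_char[OF c'] by blast
  define u where "u = c - x^2"
  define v where "v = c' - y^2"
  have u: "ereal (of_int (ord c + d)) \<le> vo u" using x u_def by simp
  have v: "ereal (of_int (ord c' + d)) \<le> vo v" using y v_def by simp
  have x2: "ereal (of_int (ord c)) \<le> vo (x^2)"
  proof -
    have "x^2 = c - u" unfolding u_def by simp
    moreover have "ereal (of_int (ord c)) \<le> vo c" using c by (simp add: vo_nz)
    moreover have "ereal (of_int (ord c)) \<le> vo u" using vo_ge_mono[OF u, of "ord c"] False by simp
    ultimately show ?thesis using vo_diff_ge by metis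
  qed
  have y2: "ereal (of_int (ord c')) \<le> vo (y^2)"
  proof -
    have "y^2 = c' - v" unfolding v_def by simp
    moreover have "ereal (of_int (ord c')) \<le> vo c'" using c' by (simp add: vo_nz)
    moreover have "ereal (of_int (ord c')) \<le> vo v" using vo_ge_mono[OF v, of "ord c'"] False by simp
    ultimately show ?thesis using vo_diff_ge by metis
  qed
  let ?K = "ereal (of_int (ord (c*c') + d))"
  have oc: "ord (c*c') = ord c + ord c'" using c c' by (simp add: ord_mult)
  have e: "c * c' - (x*y)^2 = x^2 * v + y^2 * u + u * v" unfolding u_def v_def by (simp add: algebra_simps power2_eq_square)
  have t1: "?K \<le> vo (x^2 * v)" using vo_ge_mult[OF x2 v] oc by (simp add: algebra_simps)
  have t2: "?K \<le> vo (y^2 * u)" using vo_ge_mult[OF y2 u] oc by (simp add: algebra_simps)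
  have t3: "?K \<le> vo (u * v)" using vo_ge_mono[OF vo_ge_mult[OF u v], of "ord (c*c') + d"] oc False by (simp add: algebra_simps)
  have "?K \<le> vo (c * c' - (x*y)^2)" unfolding e by (intro vo_add_ge t1 t2 t3)
  then show ?thesis using dd_char[of "c*c'" d] c c' by auto
qed

lemma dd_dom:
  assumes "c \<noteq> 0" "c' \<noteq> 0"
  shows "min (dd ord c) (dd ord c') \<le> dd ord (c * c')"
  by (rule isint_le_by_thresholds) (use assms dd_isint isint_min dd_dom_thr in auto)

lemma dd_sq_thr:
  fixes d :: int
  assumes c: "c \<noteq> 0" and t: "t \<noteq> 0" and h: "ereal (of_int d) \<le> dd ord c"
  shows "ereal (of_int d) \<le> dd ord (c * t^2)"
proof -
  obtain x where x: "ereal (of_int (ord c + d)) \<le> vo (c - x^2)" using h dd_char[OF c] by blast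
  have e: "c * t^2 - (x*t)^2 = t^2 * (c - x^2)" by (simp add: algebra_simps power2_eq_square)
  have o: "ord (c * t^2) = 2 * ord t + ord c" using c t by (simp add: ord_mult ord_power)
  have t2: "ereal (of_int (2 * ord t)) \<le> vo (t^2)" using t by (simp add: vo_nz ord_power)
  have "ereal (of_int (ord (c*t^2) + d)) \<le> vo (c * t^2 - (x*t)^2)"
    unfolding e using vo_ge_mult[OF t2 x] o by (simp add: algebra_simps)
  then show ?thesis using dd_char[of "c * t^2" d] c t by auto
qed

lemma dd_sq: assumes "c \<noteq> 0" "t \<noteq> 0" shows "dd ord (c * t^2) = dd ord c"
proof (rule antisym)
  show "dd ord c \<le> dd ord (c * t^2)"
    by (rule isint_le_by_thresholds) (use assms dd_isint dd_sq_thr in auto)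
  have "dd ord (c * t^2) \<le> dd ord ((c * t^2) * (inverse t)^2)"
    by (rule isint_le_by_thresholds) (use assms dd_isint dd_sq_thr in auto)
  also have "(c * t^2) * (inverse t)^2 = c" using assms by (simp add: field_simps power2_eq_square)
  finally show "dd ord (c * t^2) \<le> dd ord c" .
qed

end

context dlf begin

definition cls :: "'a \<Rightarrow> 'a set" where "cls x = {y. 0 \<le> vo y \<and> 1 \<le> vo (y - x)}"

lemma cong_trans: "1 \<le> vo (x - y) \<Longrightarrow> 1 \<le> vo (y - z) \<Longrightarrow> 1 \<le> vo (x - z)"
  using vo_add_ge[of 1 "x - y" "y - z"] by simp

lemma cong_sym: "1 \<le> vo (x - y) \<Longrightarrow> 1 \<le> vo (y - x)"
  using vo_uminus[of "x - y"] by simp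

lemma cls_eq: assumes "0 \<le> vo x" "0 \<le> vo y" shows "cls x = cls y \<longleftrightarrow> 1 \<le> vo (x - y)"
proof
  assume "cls x = cls y"
  moreover have "x \<in> cls x" using assms unfolding cls_def by simp
  ultimately show "1 \<le> vo (x - y)" unfolding cls_def by auto
next
  assume h: "1 \<le> vo (x - y)"
  show "cls x = cls y" unfolding cls_def using h cong_trans cong_sym by blast
qed

lemma vo_O_mult: "0 \<le> vo x \<Longrightarrow> 0 \<le> vo y \<Longrightarrow> 0 \<le> vo (x*y)"
  by (simp add: vo_mult)

lemma vo_P_mult: "1 \<le> vo x \<Longrightarrow> 0 \<le> vo y \<Longrightarrow> 1 \<le> vo (x*y)"
  using add_mono[of 1 "vo x" 0 "vo y"] by (simp add: vo_mult)

lemma vo_two_ge: "1 \<le> vo (2::'a)"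
  using e_pos by (simp add: vo_two)

lemma vo_half: "1 \<le> vo x + vo x \<Longrightarrow> 1 \<le> vo x"
  by (cases "x = 0") (auto simp: vo_nz)

lemma residue_sqrt:
  assumes u: "0 \<le> vo u"
  shows "\<exists>x. 1 \<le> vo (u - x^2)"
proof -
  obtain S where S: "finite S" "S \<subseteq> intO ord" "\<forall>x\<in>intO ord. \<exists>s\<in>S. x - s \<in> maxP ord"
    using F unfolding dyadic_local_field_def by blast
  have SO: "\<And>s. s \<in> S \<Longrightarrow> 0 \<le> vo s" using S(2) intO_iff by blast
  define CL where "CL = cls ` S"
  have clin: "\<And>x. 0 \<le> vo x \<Longrightarrow> cls x \<in> CL"
  proof -
    fix x assume x: "0 \<le> vo x"
    then obtain s where s: "s \<in> S" "x - s \<in> maxP ord" using S(3) intO_iff by blast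
    then have "cls x = cls s" using cls_eq[OF x SO[OF s(1)]] maxP_iff by blast
    then show "cls x \<in> CL" unfolding CL_def using s by blast
  qed
  define h where "h C = cls ((SOME x. 0 \<le> vo x \<and> C = cls x)^2)" for C
  have hx: "h (cls x) = cls (x^2)" if x: "0 \<le> vo x" for x
  proof -
    have ex: "\<exists>x'. 0 \<le> vo x' \<and> cls x = cls x'" using x by blast
    define x' where "x' = (SOME x'. 0 \<le> vo x' \<and> cls x = cls x')"
    have x': "0 \<le> vo x'" "cls x = cls x'" using someI_ex[OF ex] unfolding x'_def by auto
    have d: "1 \<le> vo (x - x')" using cls_eq[OF x x'(1)] x'(2) by blast
    have s: "0 \<le> vo (x + x')" using vo_add_ge[OF x x'(1)] .
    have "1 \<le> vo ((x - x') * (x + x'))" by (rule vo_P_mult[OF d s])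
    moreover have "(x - x') * (x + x') = x^2 - x'^2" by (simp add: algebra_simps power2_eq_square)
    ultimately have "cls (x^2) = cls (x'^2)"
      using cls_eq[of "x^2" "x'^2"] x x'(1) by (simp add: vo_O_mult power2_eq_square)
    then show ?thesis unfolding h_def x'_def by simp
  qed
  have hCL: "h ` CL \<subseteq> CL"
  proof
    fix D assume "D \<in> h ` CL"
    then obtain s where s: "s \<in> S" "D = h (cls s)" unfolding CL_def by blast
    then have "D = cls (s^2)" using hx SO by blast
    moreover have "0 \<le> vo (s^2)" using SO[OF s(1)] by (simp add: vo_O_mult power2_eq_square)
    ultimately show "D \<in> CL" using clin by blast
  qed
  have inj: "inj_on h CL"
  proof (rule inj_onI)
    fix C1 C2 assume C: "C1 \<in> CL" "C2 \<in> CL" "h C1 = h C2"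
    then obtain x y where xy: "x \<in> S" "y \<in> S" "C1 = cls x" "C2 = cls y" unfolding CL_def by blast
    have x: "0 \<le> vo x" and y: "0 \<le> vo y" using xy SO by auto
    have "cls (x^2) = cls (y^2)" using C(3) hx[OF x] hx[OF y] xy by simp
    then have d2: "1 \<le> vo (x^2 - y^2)" using cls_eq[of "x^2" "y^2"] x y by (simp add: vo_O_mult power2_eq_square)
    have t: "1 \<le> vo (2 * y * (x - y))"
    proof -
      have "0 \<le> vo (y * (x - y))" using vo_O_mult[OF y vo_diff_ge[OF x y]] .
      then have "1 \<le> vo (2 * (y * (x - y)))" using vo_P_mult[OF vo_two_ge] by blast
      then show ?thesis by (simp add: mult.assoc)
    qed
    have "(x - y)^2 = (x^2 - y^2) - 2 * y * (x - y)" by (simp add: algebra_simps power2_eq_square)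
    then have "1 \<le> vo ((x - y)^2)" using vo_diff_ge[OF d2 t] by simp
    then have "1 \<le> vo (x - y)" using vo_half by (simp add: power2_eq_square vo_mult)
    then show "C1 = C2" using xy cls_eq[OF x y] by simp
  qed
  have "h ` CL = CL" using endo_inj_surj[OF _ hCL inj] S(1) unfolding CL_def by simp
  then obtain C where C: "C \<in> CL" "h C = cls u" using clin[OF u] by (metis imageE)
  then obtain x where x: "x \<in> S" "C = cls x" unfolding CL_def by blast
  have "cls (x^2) = cls u" using C hx[of x] x SO by simp
  then have "1 \<le> vo (x^2 - u)" using cls_eq[of "x^2" u] u SO[OF x(1)] by (simp add: vo_O_mult power2_eq_square)
  then show ?thesis using cong_sym by blast
qed

lemma dd_even: assumes c: "c \<noteq> 0" and ev: "even (ord c)" shows "1 \<le> dd ord c"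
proof -
  obtain h where h: "ord c = 2 * h" using ev by (metis evenE)
  define z where "z = pw h"
  have z: "z \<noteq> 0" "ord z = h" unfolding z_def using pw_nz ord_pw by auto
  define u where "u = c / z^2"
  have u: "u \<noteq> 0" "ord u = 0" unfolding u_def using c z h by (auto simp: ord_divide ord_power)
  obtain x0 where x0: "1 \<le> vo (u - x0^2)" using residue_sqrt[of u] u by (auto simp: vo_nz)
  have cu: "c = z^2 * u" unfolding u_def using z by simp
  have e: "c - (z * x0)^2 = z^2 * (u - x0^2)" unfolding cu by (simp add: algebra_simps power2_eq_square)
  have z2: "ereal (of_int (2*h)) \<le> vo (z^2)" using z by (simp add: vo_nz ord_power)
  have x1: "ereal (of_int 1) \<le> vo (u - x0^2)" using x0 by (simp add: one_ereal_def)
  have "ereal (of_int (ord c + 1)) \<le> vo (c - (z*x0)^2)" unfolding e using vo_ge_mult[OF z2 x1] h by simp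
  then have "ereal (of_int 1) \<le> dd ord c" using dd_char[OF c, of 1] by blast
  then show ?thesis by (simp add: one_ereal_def)
qed

lemma dd_lt1_odd: "c \<noteq> 0 \<Longrightarrow> dd ord c < 1 \<Longrightarrow> odd (ord c)"
  using dd_even by fastforce

end

lemma bil_add_r: "bil G k x (\<lambda>i. u i + v i) = bil G k x u + bil G k x v"
  unfolding bil_def by (simp add: algebra_simps sum.distrib)
lemma bil_scal_r: "bil G k x (\<lambda>i. c * u i) = c * bil G k x u"
  unfolding bil_def by (simp add: algebra_simps sum_distrib_left)
lemma bil_add_l: "bil G k (\<lambda>i. u i + v i) x = bil G k u x + bil G k v x"
  unfolding bil_def by (simp add: algebra_simps sum.distrib)
lemma bil_scal_l: "bil G k (\<lambda>i. c * u i) x = c * bil G k u x"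
  unfolding bil_def by (simp add: algebra_simps sum_distrib_left)
lemma bil_diff_l: "bil G k (\<lambda>i. u i - c * v i) x = bil G k u x - c * bil G k v x"
  unfolding bil_def by (simp add: algebra_simps sum_distrib_left sum_subtractf)
lemma bil_diff_r: "bil G k x (\<lambda>i. u i - c * v i) = bil G k x u - c * bil G k x v"
  unfolding bil_def by (simp add: algebra_simps sum_distrib_left sum_subtractf)

lemma bil_sym: assumes "quad_space G k" shows "bil G k u v = bil G k v u"
proof -
  have "bil G k u v = (\<Sum>j<k. \<Sum>i<k. u i * G i j * v j)" unfolding bil_def by (rule sum.swap)
  also have "\<dots> = bil G k v u" unfolding bil_def using assms unfolding quad_space_def
    by (intro sum.cong refl) (simp add: algebra_simps)
  finally show ?thesis .
qed

lemma qf_proj: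
  assumes "quad_space G k" "qf G k x \<noteq> 0"
  shows "qf G k (proj G k x y) = qf G k y - (bil G k x y / qf G k x)^2 * qf G k x"
proof -
  define t where "t = bil G k x y / qf G k x"
  have p: "proj G k x y = (\<lambda>i. y i - t * x i)" unfolding proj_def t_def by simp
  have "qf G k (proj G k x y) = bil G k y y - t * bil G k y x - t * (bil G k x y - t * bil G k x x)"
    unfolding qf_def p bil_diff_l bil_diff_r by simp
  also have "\<dots> = qf G k y - 2 * t * bil G k x y + t^2 * qf G k x"
    using bil_sym[OF assms(1), of y x] unfolding qf_def by (simp add: algebra_simps power2_eq_square)
  also have "bil G k x y = t * qf G k x" unfolding t_def using assms(2) by simp
  finally show ?thesis unfolding t_def[symmetric] by (simp add: algebra_simps power2_eq_square)
qed

lemma qf_add: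
  assumes "quad_space G k"
  shows "qf G k (\<lambda>i. y i + x i) = qf G k y + 2 * bil G k x y + qf G k x"
  unfolding qf_def bil_add_l bil_add_r using bil_sym[OF assms, of y x] by (simp add: algebra_simps)

definition omod :: "('a::field \<Rightarrow> int) \<Rightarrow> (nat \<Rightarrow> 'a) set \<Rightarrow> bool" where
  "omod ord L \<longleftrightarrow> (\<forall>u\<in>L. \<forall>v\<in>L. (\<lambda>i. u i + v i) \<in> L) \<and> (\<forall>u\<in>L. \<forall>c\<in>intO ord. (\<lambda>i. c * u i) \<in> L)"

lemma omod_proj: assumes "omod ord L" shows "omod ord (proj G k x ` L)"
proof -
  have a: "proj G k x (\<lambda>i. u i + v i) = (\<lambda>i. proj G k x u i + proj G k x v i)" for u v
    unfolding proj_def bil_add_r by (simp add: algebra_simps add_divide_distrib)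
  have s: "proj G k x (\<lambda>i. c * u i) = (\<lambda>i. c * proj G k x u i)" for c u
    unfolding proj_def bil_scal_r by (simp add: algebra_simps)
  show ?thesis using assms unfolding omod_def
    by (auto simp: a[symmetric] s[symmetric] image_iff)
qed

fun stage :: "(nat \<Rightarrow> nat \<Rightarrow> 'a::field) \<Rightarrow> nat \<Rightarrow> (nat \<Rightarrow> 'a) set \<Rightarrow> (nat \<Rightarrow> 'a) list \<Rightarrow> nat \<Rightarrow> (nat \<Rightarrow> 'a) set" where
  "stage G k M xs 0 = M"
| "stage G k M [] (Suc i) = M"
| "stage G k M (x # xs) (Suc i) = stage G k (proj G k x ` M) xs i"

lemma omod_stage: "omod ord M \<Longrightarrow> omod ord (stage G k M xs i)"
  by (induction G k M xs i rule: stage.induct) (auto simp: omod_proj)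

lemma bong_at:
  assumes "is_bong ord G k M xs" "i < length xs"
  shows "xs ! i \<in> stage G k M xs i \<and> qf G k (xs ! i) \<noteq> 0 \<and>
    norm_ideal ord G k (stage G k M xs i) = {qf G k (xs ! i) * c | c. c \<in> intO ord} \<and>
    (Suc i < length xs \<longrightarrow> xs ! (Suc i) \<in> proj G k (xs ! i) ` stage G k M xs i)"
  using assms
proof (induction xs arbitrary: M i)
  case Nil then show ?case by simp
next
  case (Cons x xs)
  show ?case
  proof (cases i)
    case 0
    have "Suc 0 < length (x # xs) \<Longrightarrow> xs ! 0 \<in> proj G k x ` M"
      using Cons.IH[of "proj G k x ` M" 0] Cons.prems by simp
    then show ?thesis using Cons.prems 0 by simp
  next
    case (Suc j)
    then show ?thesis using Cons.IH[of "proj G k x ` M" j] Cons.prems by simp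
  qed
qed

context dlf begin

lemma omod_span: "omod ord (O_span ord gs)"
  unfolding omod_def O_span_def
proof (intro conjI ballI)
  fix u v assume "u \<in> {\<lambda>i. \<Sum>j<length gs. c j * (gs ! j) i |c. \<forall>j. c j \<in> intO ord}"
    "v \<in> {\<lambda>i. \<Sum>j<length gs. c j * (gs ! j) i |c. \<forall>j. c j \<in> intO ord}"
  then obtain c c' where c: "u = (\<lambda>i. \<Sum>j<length gs. c j * (gs ! j) i)" "\<forall>j. c j \<in> intO ord"
    and c': "v = (\<lambda>i. \<Sum>j<length gs. c' j * (gs ! j) i)" "\<forall>j. c' j \<in> intO ord" by blast
  have "(\<lambda>i. u i + v i) = (\<lambda>i. \<Sum>j<length gs. (c j + c' j) * (gs ! j) i)"
    unfolding c c' by (simp add: algebra_simps sum.distrib)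
  moreover have "\<forall>j. c j + c' j \<in> intO ord"
    using c(2) c'(2) vo_add_ge unfolding intO_iff by blast
  ultimately show "(\<lambda>i. u i + v i) \<in> {\<lambda>i. \<Sum>j<length gs. c j * (gs ! j) i |c. \<forall>j. c j \<in> intO ord}"
    unfolding mem_Collect_eq by (intro exI[of _ "\<lambda>j. c j + c' j"]) simp
next
  fix u and d :: 'a assume "u \<in> {\<lambda>i. \<Sum>j<length gs. c j * (gs ! j) i |c. \<forall>j. c j \<in> intO ord}" "d \<in> intO ord"
  then obtain c where c: "u = (\<lambda>i. \<Sum>j<length gs. c j * (gs ! j) i)" "\<forall>j. c j \<in> intO ord" and d: "d \<in> intO ord" by blast
  have "(\<lambda>i. d * u i) = (\<lambda>i. \<Sum>j<length gs. (d * c j) * (gs ! j) i)"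
    unfolding c by (simp add: algebra_simps sum_distrib_left)
  moreover have "\<forall>j. d * c j \<in> intO ord"
    using c(2) d vo_O_mult unfolding intO_iff by blast
  ultimately show "(\<lambda>i. d * u i) \<in> {\<lambda>i. \<Sum>j<length gs. c j * (gs ! j) i |c. \<forall>j. c j \<in> intO ord}"
    unfolding mem_Collect_eq by (intro exI[of _ "\<lambda>j. d * c j"]) simp
qed

end

context dlf begin

lemma nideal_mem: "z \<in> L \<Longrightarrow> qf G k z \<in> norm_ideal ord G k L"
  unfolding norm_ideal_def
  by (rule CollectI, rule exI[of _ 1], rule exI[of _ "\<lambda>_. 1"], rule exI[of _ "\<lambda>_. z"]) (simp add: intO_def)

lemma pair:
  assumes sym: "quad_space G k" and L: "omod ord L" and x: "x \<in> L" and y: "y \<in> L"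
    and a: "qf G k x \<noteq> 0" and NI: "norm_ideal ord G k L = {qf G k x * c | c. c \<in> intO ord}"
    and a': "qf G k (proj G k x y) \<noteq> 0"
  shows "ord (qf G k x) - 2 * eram ord \<le> ord (qf G k (proj G k x y))"
    "ord (qf G k (proj G k x y)) < ord (qf G k x) \<Longrightarrow> even (ord (qf G k (proj G k x y)) - ord (qf G k x))"
    "ereal (of_int (ord (qf G k x) - ord (qf G k (proj G k x y)))) \<le> dd ord (- qf G k x * qf G k (proj G k x y))"
proof -
  define A where "A = qf G k x"
  define A' where "A' = qf G k (proj G k x y)"
  define Q where "Q = qf G k y"
  define B where "B = bil G k x y"
  define t where "t = B / A"
  have An: "A \<noteq> 0" and A'n: "A' \<noteq> 0" using a a' unfolding A_def A'_def by auto
  have vA: "vo A = ereal (of_int (ord A))" using An by (simp add: vo_nz)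
  have inA: "ereal (of_int (ord A)) \<le> vo (qf G k z)" if z: "z \<in> L" for z
  proof -
    obtain c where c: "qf G k z = A * c" "c \<in> intO ord" using nideal_mem[OF z, of G k] NI unfolding A_def by auto
    have "ereal (of_int 0) \<le> vo c" using c(2) intO_iff by (simp add: zero_ereal_def)
    then show ?thesis using vo_ge_mult[of "ord A" A 0 c] vA c(1) by simp
  qed
  have hQ: "ereal (of_int (ord A)) \<le> vo Q" unfolding Q_def using inA[OF y] .
  have yx: "(\<lambda>i. y i + x i) \<in> L" using L x y unfolding omod_def by blast
  have hS: "ereal (of_int (ord A)) \<le> vo (Q + 2 * B + A)"
    using inA[OF yx] qf_add[OF sym, of y x] unfolding Q_def B_def A_def by simp
  have "2 * B = (Q + 2 * B + A) - Q - A" by simp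
  then have h2B: "ereal (of_int (ord A)) \<le> vo (2 * B)"
    using vo_diff_ge[OF vo_diff_ge[OF hS hQ], of A] vA by simp
  have Bt: "2 * B = 2 * t * A" unfolding t_def using An by simp
  have ht: "t = 0 \<or> - eram ord \<le> ord t"
  proof (cases "t = 0")
    case False
    then have "ord (2 * t * A) = eram ord + ord t + ord A" using An two_nz by (simp add: ord_mult eram_def)
    then show ?thesis using h2B Bt False An two_nz by (simp add: vo_nz)
  qed simp
  have A'e: "A' = Q - t^2 * A"
    unfolding A'_def Q_def t_def B_def A_def using qf_proj[OF sym a] by simp
  have tA: "ereal (of_int (ord A - 2 * eram ord)) \<le> vo (t^2 * A)"
  proof (cases "t = 0")
    case False
    then show ?thesis using ht An by (simp add: vo_nz ord_mult ord_power)
  qed simp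
  have "ereal (of_int (ord A - 2 * eram ord)) \<le> vo A'"
    unfolding A'e using vo_diff_ge[OF vo_ge_mono[OF hQ] tA] e_pos by simp
  then show "ord (qf G k x) - 2 * eram ord \<le> ord (qf G k (proj G k x y))"
    using A'n unfolding A_def A'_def by (simp add: vo_nz)
  show "even (ord (qf G k (proj G k x y)) - ord (qf G k x))" if lt: "ord (qf G k (proj G k x y)) < ord (qf G k x)"
  proof -
    have lt': "vo (- A') < vo Q" using lt hQ A'n unfolding A_def A'_def by (cases "Q = 0") (auto simp: vo_nz)
    have "vo (- A' + Q) = vo (- A')" by (rule vo_strict[OF lt'])
    moreover have "- A' + Q = t^2 * A" unfolding A'e by simp
    ultimately have e: "vo (t^2 * A) = ereal (of_int (ord A'))" using A'n by (simp add: vo_nz)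
    then have tn: "t \<noteq> 0" by auto
    then have "2 * ord t + ord A = ord A'" using e An by (simp add: vo_nz ord_mult ord_power)
    then show ?thesis unfolding A_def A'_def by presburger
  qed
  have cn: "- A * A' \<noteq> 0" using An A'n by simp
  have ce: "- A * A' - (t * A)^2 = A * (- Q)" unfolding A'e by (simp add: algebra_simps power2_eq_square)
  have "ereal (of_int (ord A + ord A)) \<le> vo (A * (- Q))"
    using vo_ge_mult[of "ord A" A "ord A" "- Q"] vA hQ by simp
  then have "ereal (of_int (ord (- A * A') + (ord A - ord A'))) \<le> vo (- A * A' - (t * A)^2)"
    unfolding ce using An A'n by (simp add: ord_mult)
  then show "ereal (of_int (ord (qf G k x) - ord (qf G k (proj G k x y)))) \<le> dd ord (- qf G k x * qf G k (proj G k x y))"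
    using dd_char[OF cn, of "ord A - ord A'"] unfolding A_def A'_def by blast
qed

definition BF :: "(nat \<Rightarrow> 'a) \<Rightarrow> nat \<Rightarrow> bool" where
  "BF a m \<longleftrightarrow> (\<forall>i. 1 \<le> i \<and> i \<le> m \<longrightarrow> a i \<noteq> 0) \<and> (1 \<le> m \<longrightarrow> 0 \<le> ord (a 1)) \<and>
     (\<forall>i. 1 \<le> i \<and> i + 2 \<le> m \<longrightarrow> ord (a i) \<le> ord (a (i + 2))) \<and>
     (\<forall>i. 1 \<le> i \<and> i < m \<longrightarrow> ord (a i) - 2 * eram ord \<le> ord (a (i + 1)) \<and>
        (ord (a (i + 1)) < ord (a i) \<longrightarrow> even (ord (a (i + 1)) - ord (a i))) \<and>
        ereal (of_int (ord (a i) - ord (a (i + 1)))) \<le> dd ord (- a i * a (i + 1)))"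

lemma BF_intro:
  assumes sym: "quad_space G k" and LM: "is_lattice ord k M" and IM: "integral ord G k M"
    and BM: "good_bong_repr ord G k M a m"
  shows "BF a m"
proof -
  obtain xs where xs: "length xs = m" "good_bong ord G k M xs" "\<forall>i\<in>{1..m}. qf G k (xs ! (i - 1)) = a i"
    using BM unfolding good_bong_repr_def by blast
  have ib: "is_bong ord G k M xs" using xs(2) unfolding good_bong_def by blast
  have om: "omod ord M" using LM omod_span unfolding is_lattice_def by blast
  have nz: "\<forall>i. 1 \<le> i \<and> i \<le> m \<longrightarrow> a i \<noteq> 0"
  proof (intro allI impI)
    fix i assume i: "1 \<le> i \<and> i \<le> m"
    then show "a i \<noteq> 0" using bong_at[OF ib, of "i - 1"] xs(1) xs(3) by force
  qed
  have a1: "1 \<le> m \<longrightarrow> 0 \<le> ord (a 1)"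
  proof
    assume m: "1 \<le> m"
    have "xs ! 0 \<in> M" using bong_at[OF ib, of 0] xs(1) m by simp
    then have "qf G k (xs ! 0) \<in> intO ord" using IM unfolding integral_def by blast
    moreover have "qf G k (xs ! 0) = a 1" using xs(3) m by force
    moreover have "a 1 \<noteq> 0" using nz m by simp
    ultimately show "0 \<le> ord (a 1)" unfolding intO_def by simp
  qed
  have gd: "\<forall>i. 1 \<le> i \<and> i + 2 \<le> m \<longrightarrow> ord (a i) \<le> ord (a (i + 2))"
  proof (intro allI impI)
    fix i assume i: "1 \<le> i \<and> i + 2 \<le> m"
    have "i - 1 + 2 < length xs" using xs(1) i by simp
    then have "ord (qf G k (xs ! (i - 1))) \<le> ord (qf G k (xs ! (i - 1 + 2)))"
      using xs(2) unfolding good_bong_def by blast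
    moreover have "qf G k (xs ! (i - 1)) = a i" using xs(3) i by force
    moreover have "qf G k (xs ! (i - 1 + 2)) = a (i + 2)" using xs(3)[rule_format, of "i+2"] i by (simp add: Suc_diff_le)
    ultimately show "ord (a i) \<le> ord (a (i + 2))" by simp
  qed
  have pr: "ord (a i) - 2 * eram ord \<le> ord (a (i + 1)) \<and>
        (ord (a (i + 1)) < ord (a i) \<longrightarrow> even (ord (a (i + 1)) - ord (a i))) \<and>
        ereal (of_int (ord (a i) - ord (a (i + 1)))) \<le> dd ord (- a i * a (i + 1))"
    if i: "1 \<le> i" "i < m" for i
  proof -
    define p where "p = i - 1"
    have p: "p < length xs" "Suc p < length xs" "Suc p = i" using i xs(1) unfolding p_def by auto
    note bp = bong_at[OF ib p(1)]
    obtain y where y: "y \<in> stage G k M xs p" "xs ! Suc p = proj G k (xs ! p) y" using bp p(2) by blast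
    have a'n: "qf G k (xs ! Suc p) \<noteq> 0" using bong_at[OF ib p(2)] by blast
    have ai: "qf G k (xs ! p) = a i" using xs(3) i unfolding p_def by force
    have ai1: "qf G k (xs ! Suc p) = a (i + 1)" using xs(3)[rule_format, of "i+1"] i p(3) by simp
    note P = pair[OF sym omod_stage[OF om] _ y(1), of "xs ! p"]
    show ?thesis using P bp a'n ai ai1 y(2) by auto
  qed
  show ?thesis unfolding BF_def using nz a1 gd pr by blast
qed

end

lemma pr_Suc: "i \<le> Suc j \<Longrightarrow> pr a i (Suc j) = pr a i j * a (Suc j)"
  unfolding pr_def by (simp add: prod.nat_ivl_Suc')

lemma pr_10: "pr a 1 0 = 1" unfolding pr_def by simp

lemma pr_nz: "(\<forall>l. i \<le> l \<and> l \<le> j \<longrightarrow> a l \<noteq> 0) \<Longrightarrow> pr a i j \<noteq> 0"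
  unfolding pr_def by (auto simp: prod_zero_iff)

lemma alpha_le_T0:
  "alpha ord a m i \<le> ereal ((of_int (ord (a (i+1))) - of_int (ord (a i))) / 2 + of_int (eram ord))"
  unfolding alpha_def by (rule Min_le) auto

lemma alpha_le_T: "1 \<le> j \<Longrightarrow> j \<le> m - 1 \<Longrightarrow> alpha ord a m i \<le> Tterm ord a i j"
  unfolding alpha_def by (rule Min_le) auto

lemma alpha_ge:
  "z \<le> ereal ((of_int (ord (a (i+1))) - of_int (ord (a i))) / 2 + of_int (eram ord)) \<Longrightarrow>
   (\<And>j. 1 \<le> j \<Longrightarrow> j \<le> m - 1 \<Longrightarrow> z \<le> Tterm ord a i j) \<Longrightarrow> z \<le> alpha ord a m i"
  unfolding alpha_def by (subst Min_ge_iff) auto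

context dlf begin

lemma BF_nz: "BF a m \<Longrightarrow> 1 \<le> i \<Longrightarrow> i \<le> m \<Longrightarrow> a i \<noteq> 0" unfolding BF_def by blast
lemma BF_1: "BF a m \<Longrightarrow> 1 \<le> m \<Longrightarrow> 0 \<le> ord (a 1)" unfolding BF_def by blast
lemma BF_good: "BF a m \<Longrightarrow> 1 \<le> i \<Longrightarrow> i + 2 \<le> m \<Longrightarrow> ord (a i) \<le> ord (a (i + 2))" unfolding BF_def by blast
lemma BF_B3: "BF a m \<Longrightarrow> 1 \<le> i \<Longrightarrow> i < m \<Longrightarrow> ord (a i) - 2 * eram ord \<le> ord (a (i + 1))" unfolding BF_def by blast
lemma BF_B4: "BF a m \<Longrightarrow> 1 \<le> i \<Longrightarrow> i < m \<Longrightarrow> ord (a (i + 1)) < ord (a i) \<Longrightarrow> even (ord (a (i + 1)) - ord (a i))"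
  unfolding BF_def by blast
lemma BF_B5: "BF a m \<Longrightarrow> 1 \<le> i \<Longrightarrow> i < m \<Longrightarrow> ereal (of_int (ord (a i) - ord (a (i + 1)))) \<le> dd ord (- a i * a (i + 1))"
  unfolding BF_def by blast

lemma BF_chain0: assumes "BF a m" "1 \<le> i" shows "i + 2 * t \<le> m \<Longrightarrow> ord (a i) \<le> ord (a (i + 2 * t))"
proof (induction t)
  case (Suc t)
  then have "ord (a i) \<le> ord (a (i + 2 * t))" by simp
  also have "\<dots> \<le> ord (a (i + 2 * t + 2))" using BF_good[OF assms(1), of "i + 2*t"] Suc.prems assms(2) by simp
  finally show ?case by (simp add: algebra_simps)
qed simp

lemma BF_chain: assumes "BF a m" "1 \<le> i" "i \<le> j" "j \<le> m" "even (j - i)" shows "ord (a i) \<le> ord (a j)"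
proof -
  obtain t where t: "j - i = 2 * t" using assms(5) by (metis evenE)
  then have "j = i + 2 * t" using assms(3) by simp
  then show ?thesis using BF_chain0[OF assms(1,2), of t] assms(4) by simp
qed

lemma dd_BF_nn: "BF a m \<Longrightarrow> 1 \<le> j \<Longrightarrow> j < m \<Longrightarrow> 0 \<le> dd ord (- a j * a (j + 1))"
proof -
  assume h: "BF a m" "1 \<le> j" "j < m"
  have "a j \<noteq> 0" "a (j + 1) \<noteq> 0" using BF_nz[OF h(1)] h(2,3) by auto
  then show ?thesis by (intro dd_nonneg) simp
qed

lemma ord_pr: "(\<forall>l. 1 \<le> l \<and> l \<le> j \<longrightarrow> a l \<noteq> 0) \<Longrightarrow> ord (pr a 1 j) = (\<Sum>i\<in>{1..j}. ord (a i))"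
proof (induction j)
  case 0 then show ?case by (simp add: pr_def)
next
  case (Suc j)
  have nz: "pr a 1 j \<noteq> 0" using Suc.prems by (intro pr_nz) auto
  have "ord (pr a 1 (Suc j)) = ord (pr a 1 j) + ord (a (Suc j))"
    using nz Suc.prems by (simp add: pr_Suc ord_mult)
  then show ?case using Suc by (simp add: sum.atLeast_Suc_atMost_Suc_shift)
qed

lemma G_lemma:
  assumes BF: "BF b n" and p: "1 \<le> p" "p \<le> q"
  shows "q \<le> n \<Longrightarrow> even (ord (b q)) \<noteq> even (ord (b p)) \<Longrightarrow>
    \<exists>j. p \<le> j \<and> j < q \<and> odd (ord (b (j+1)) - ord (b j)) \<and> (even (ord (b j)) = even (ord (b p))) \<and>
        (ord (b p) \<le> ord (b j) \<or> odd (j - p))"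
  using p(2)
proof (induction q rule: dec_induct)
  case base then show ?case by simp
next
  case (step q)
  show ?case
  proof (cases "even (ord (b q)) = even (ord (b p))")
    case False
    then obtain j where "p \<le> j \<and> j < q \<and> odd (ord (b (j+1)) - ord (b j)) \<and> (even (ord (b j)) = even (ord (b p))) \<and>
        (ord (b p) \<le> ord (b j) \<or> odd (j - p))" using step by auto
    then show ?thesis by (intro exI[of _ j]) auto
  next
    case True
    have od: "odd (ord (b (q+1)) - ord (b q))" using True step.prems by auto
    have "ord (b p) \<le> ord (b q) \<or> odd (q - p)"
      using BF_chain[OF BF p(1) step.hyps(1)] step.prems by auto
    then show ?thesis using od True step.hyps by (intro exI[of _ q]) auto
  qed
qed

end

lemma er_ge_iff: "ereal (of_int y) \<le> ereal (of_int x) + d \<longleftrightarrow> ereal (of_int (y - x)) \<le> d"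
  by (cases d) auto
lemma er_le_iff: "ereal (of_int x) + d \<le> ereal (of_int y) \<longleftrightarrow> d \<le> ereal (of_int (y - x))"
  by (cases d) auto
lemma isint_not_ge: "isint A \<Longrightarrow> \<not> A \<le> ereal (of_int k) \<Longrightarrow> ereal (of_int (k + 1)) \<le> A"
  unfolding isint_def by auto

context dlf begin

lemma dd_one: "\<infinity> \<le> dd ord 1"
proof (rule isint_le_by_thresholds)
  show "isint \<infinity>" unfolding isint_def by simp
  fix d :: int
  have "\<exists>x. ereal (of_int (ord 1 + d)) \<le> vo (1 - x^2)" by (rule exI[of _ 1]) simp
  moreover have "(1::'a) \<noteq> 0" by simp
  ultimately show "ereal (of_int d) \<le> dd ord 1" using dd_char by blast
qed

lemma Wlem:
  assumes BFa: "BF a m" and BFb: "BF b n"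
  shows "2 * h \<le> m \<Longrightarrow> 2 * h \<le> n \<Longrightarrow> (\<forall>j. odd j \<and> j < 2 * h \<longrightarrow> K \<le> dd ord (- a j * a (j + 1))) \<Longrightarrow>
    (\<forall>j. odd j \<and> j < 2 * h \<longrightarrow> K \<le> dd ord (- b j * b (j + 1))) \<Longrightarrow>
    K \<le> dd ord (pr a 1 (2 * h) * pr b 1 (2 * h))"
proof (induction h)
  case 0 then show ?case using dd_one by (simp add: pr_def order_trans[rotated])
next
  case (Suc h)
  define w where "w = pr a 1 (2 * h) * pr b 1 (2 * h)"
  define ca where "ca = - a (2*h+1) * a (2*h+1+1)"
  define cb where "cb = - b (2*h+1) * b (2*h+1+1)"
  have IH: "K \<le> dd ord w" unfolding w_def using Suc by auto
  have ka: "K \<le> dd ord ca" unfolding ca_def using Suc.prems(3) by auto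
  have kb: "K \<le> dd ord cb" unfolding cb_def using Suc.prems(4) by auto
  have anz: "\<And>l. 1 \<le> l \<Longrightarrow> l \<le> 2 * Suc h \<Longrightarrow> a l \<noteq> 0" using BF_nz[OF BFa] Suc.prems by auto
  have bnz: "\<And>l. 1 \<le> l \<Longrightarrow> l \<le> 2 * Suc h \<Longrightarrow> b l \<noteq> 0" using BF_nz[OF BFb] Suc.prems by auto
  have wnz: "w \<noteq> 0" unfolding w_def using anz bnz by (auto intro!: pr_nz)
  have canz: "ca \<noteq> 0" unfolding ca_def using anz by auto
  have cbnz: "cb \<noteq> 0" unfolding cb_def using bnz by auto
  have eq: "pr a 1 (2 * Suc h) * pr b 1 (2 * Suc h) = w * (ca * cb)"
  proof -
    have "2 * Suc h = Suc (Suc (2 * h))" by simp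
    then show ?thesis unfolding w_def ca_def cb_def by (simp add: pr_Suc algebra_simps)
  qed
  have "K \<le> min (dd ord ca) (dd ord cb)" using ka kb by simp
  also have "\<dots> \<le> dd ord (ca * cb)" by (rule dd_dom[OF canz cbnz])
  finally have k2: "K \<le> dd ord (ca * cb)" .
  have "K \<le> min (dd ord w) (dd ord (ca * cb))" using IH k2 by simp
  also have "\<dots> \<le> dd ord (w * (ca * cb))" by (rule dd_dom) (use wnz canz cbnz in auto)
  finally show ?case unfolding eq .
qed

end

context dlf begin

lemma main_part1:
  assumes BFa: "BF a m" and BFb: "BF b n"
    and n3: "n \<ge> 3" and nodd: "odd n" and mn: "m \<ge> n + 1"
    and Rn1: "ord (a (n - 1)) = - 2 * eram ord" and Rn: "ord (a n) = 0"
  shows "\<forall>i. 1 \<le> i \<and> i \<le> n \<and> odd i \<longrightarrow> ord (a i) = 0"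
    "\<forall>i. 2 \<le> i \<and> i \<le> n - 1 \<and> even i \<longrightarrow> ord (a i) = - 2 * eram ord"
    "\<forall>j. 1 \<le> j \<and> j \<le> n \<and> odd j \<longrightarrow> 0 \<le> ord (b j)"
proof -
  show Rodd: "\<forall>i. 1 \<le> i \<and> i \<le> n \<and> odd i \<longrightarrow> ord (a i) = 0"
  proof (intro allI impI)
    fix i assume i: "1 \<le> i \<and> i \<le> n \<and> odd i"
    have "ord (a 1) \<le> ord (a i)" using BF_chain[OF BFa, of 1 i] i mn by auto
    moreover have "ord (a i) \<le> ord (a n)" using BF_chain[OF BFa, of i n] i mn nodd by auto
    moreover have "0 \<le> ord (a 1)" using BF_1[OF BFa] mn by simp
    ultimately show "ord (a i) = 0" using Rn by simp
  qed
  show "\<forall>i. 2 \<le> i \<and> i \<le> n - 1 \<and> even i \<longrightarrow> ord (a i) = - 2 * eram ord"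
  proof (intro allI impI)
    fix i assume i: "2 \<le> i \<and> i \<le> n - 1 \<and> even i"
    have "ord (a i) \<le> ord (a (n - 1))" using BF_chain[OF BFa, of i "n - 1"] i mn nodd by auto
    moreover have "ord (a (i - 1)) - 2 * eram ord \<le> ord (a (i - 1 + 1))" using BF_B3[OF BFa, of "i - 1"] i mn by auto
    moreover have "ord (a (i - 1)) = 0"
    proof -
      have "odd (i - 1)" using i by presburger
      moreover have "1 \<le> i - 1" "i - 1 \<le> n" using i by auto
      ultimately show ?thesis using Rodd by blast
    qed
    ultimately show "ord (a i) = - 2 * eram ord" using Rn1 i by simp
  qed
  show "\<forall>j. 1 \<le> j \<and> j \<le> n \<and> odd j \<longrightarrow> 0 \<le> ord (b j)"
  proof (intro allI impI)
    fix j assume j: "1 \<le> j \<and> j \<le> n \<and> odd j"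
    have "ord (b 1) \<le> ord (b j)" using BF_chain[OF BFb, of 1 j] j by auto
    moreover have "0 \<le> ord (b 1)" using BF_1[OF BFb] n3 by simp
    ultimately show "0 \<le> ord (b j)" by simp
  qed
qed

lemma PL0:
  assumes BFa: "BF a m" and BFb: "BF b n"
    and n3: "n \<ge> 3" and nodd: "odd n" and mn: "m \<ge> n + 1"
    and Rn1: "ord (a (n - 1)) = - 2 * eram ord" and Rn: "ord (a n) = 0"
    and Sn: "ord (b n) = 0"
  shows "even (ord (pr a 1 n * pr b 1 n))"
proof -
  note P = main_part1[OF assms(1-7)]
  have anz: "\<forall>l. 1 \<le> l \<and> l \<le> n \<longrightarrow> a l \<noteq> 0" using BF_nz[OF BFa] mn by auto
  have bnz: "\<forall>l. 1 \<le> l \<and> l \<le> n \<longrightarrow> b l \<noteq> 0" using BF_nz[OF BFb] by auto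
  have Sodd: "ord (b i) = 0" if i: "1 \<le> i" "i \<le> n" "odd i" for i
  proof -
    have "ord (b i) \<le> ord (b n)" using BF_chain[OF BFb, of i n] i nodd by auto
    then show ?thesis using P(3) i Sn by force
  qed
  have ea: "even (ord (a i))" if i: "i \<in> {1..n}" for i
  proof (cases "odd i")
    case True then show ?thesis using P(1) i by auto
  next
    case False
    then have "2 \<le> i" "i \<le> n - 1" using i nodd by (auto, presburger)
    then show ?thesis using P(2) False by auto
  qed
  have eb: "even (ord (b i))" if i: "i \<in> {1..n}" for i
  proof (cases "odd i")
    case True then show ?thesis using Sodd i by auto
  next
    case False
    then have i2: "2 \<le> i" "i \<le> n - 1" using i nodd by (auto, presburger)
    have l: "ord (b (i - 1)) = 0" using Sodd[of "i - 1"] i2 False by auto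
    have r: "ord (b (i + 1)) = 0" using Sodd[of "i + 1"] i2 False by auto
    consider "ord (b i) < 0" | "ord (b i) = 0" | "ord (b i) > 0" by linarith
    then show ?thesis
    proof cases
      case 1
      then have "even (ord (b (i - 1 + 1)) - ord (b (i - 1)))"
        using BF_B4[OF BFb, of "i - 1"] i2 l by auto
      then show ?thesis using l i2 by simp
    next
      case 3
      then have "even (ord (b (i + 1)) - ord (b i))"
        using BF_B4[OF BFb, of i] i2 r by auto
      then show ?thesis using r by simp
    qed simp
  qed
  have "ord (pr a 1 n * pr b 1 n) = (\<Sum>i\<in>{1..n}. ord (a i)) + (\<Sum>i\<in>{1..n}. ord (b i))"
    using anz bnz pr_nz[of 1 n a] pr_nz[of 1 n b] ord_pr[of n a] ord_pr[of n b] by (simp add: ord_mult)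
  moreover have "even (\<Sum>i\<in>{1..n}. ord (a i))" by (rule dvd_sum) (use ea in auto)
  moreover have "even (\<Sum>i\<in>{1..n}. ord (b i))" by (rule dvd_sum) (use eb in auto)
  ultimately show ?thesis by simp
qed

end

context dlf begin

lemma main:
  assumes BFa: "BF a m" and BFb: "BF b n"
    and n3: "n \<ge> 3" and nodd: "odd n" and mn: "m \<ge> n + 1"
    and Rn1: "ord (a (n - 1)) = - 2 * eram ord" and Rn: "ord (a n) = 0"
    and alpha_n: "alpha ord a m n = 1"
    and dcond: "dA ord a m (-1) n (n + 1) = ereal (of_int (1 - ord (a (n + 1))))"
  shows "ereal (of_int (ord (a (n + 1)) - ord (b n))) + dAB ord a m b n (-1) (n + 1) (n - 1)
           \<le> dAB ord a m b n 1 n n"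
proof -
  note P = main_part1[OF assms(1-7)]
  define e where "e = eram ord"
  define R' where "R' = ord (a (n + 1))"
  define Sn where "Sn = ord (b n)"
  have epos: "1 \<le> e" unfolding e_def using e_pos .
  have anz: "\<And>l. 1 \<le> l \<Longrightarrow> l \<le> m \<Longrightarrow> a l \<noteq> 0" using BF_nz[OF BFa] by auto
  have bnz: "\<And>l. 1 \<le> l \<Longrightarrow> l \<le> n \<Longrightarrow> b l \<noteq> 0" using BF_nz[OF BFb] by auto
  have Sn0: "0 \<le> Sn" unfolding Sn_def using P(3) n3 nodd by auto
  have "(1::ereal) \<le> ereal ((of_int (ord (a (n+1))) - of_int (ord (a n))) / 2 + of_int (eram ord))"
    using alpha_le_T0[of ord a m n] alpha_n by simp
  then have "(1::real) \<le> of_int R' / 2 + of_int e" unfolding R'_def e_def using Rn by simp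
  then have R'lb: "2 - 2 * e \<le> R'" by linarith
  have Tn: "\<And>j. 1 \<le> j \<Longrightarrow> j \<le> m - 1 \<Longrightarrow> 1 \<le> Tterm ord a n j"
    using alpha_le_T[where ord=ord and a=a and m=m and i=n] alpha_n by metis
  have an1: "ereal (of_int (2 * e)) \<le> alpha ord a m (n - 1)"
  proof (rule alpha_ge)
    have "n - 1 + 1 = n" using n3 by simp
    then show "ereal (of_int (2 * e)) \<le> ereal ((of_int (ord (a (n - 1 + 1))) - of_int (ord (a (n - 1)))) / 2 + of_int (eram ord))"
      using Rn Rn1 unfolding e_def by simp
  next
    fix j assume j: "1 \<le> j" "j \<le> m - 1"
    have dnn: "0 \<le> dd ord (- a j * a (j + 1))" using dd_BF_nn[OF BFa] j by simp
    show "ereal (of_int (2 * e)) \<le> Tterm ord a (n - 1) j"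
    proof (cases "j \<le> n - 1")
      case True
      have T: "Tterm ord a (n - 1) j = ereal (of_int (ord (a n) - ord (a j))) + dd ord (- a j * a (j + 1))"
        unfolding Tterm_def using True n3 by simp
      show ?thesis
      proof (cases "odd j")
        case True
        have j1: "j + 1 \<le> n - 1" using True \<open>j \<le> n - 1\<close> nodd by presburger
        have "ord (a j) = 0" using P(1) True j \<open>j \<le> n - 1\<close> by auto
        moreover have "ord (a (j + 1)) = - 2 * e" using P(2) True j j1 unfolding e_def by auto
        moreover have "ereal (of_int (ord (a j) - ord (a (j + 1)))) \<le> dd ord (- a j * a (j + 1))"
          using BF_B5[OF BFa, of j] j n3 mn by auto
        ultimately show ?thesis unfolding T using Rn by (subst er_ge_iff) simp
      next
        case False
        then have "2 \<le> j" using j by presburger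
        then have "ord (a j) = - 2 * e" using P(2) False \<open>j \<le> n - 1\<close> unfolding e_def by auto
        then show ?thesis unfolding T using Rn dnn by (subst er_ge_iff) (simp add: zero_ereal_def)
      qed
    next
      case False
      have T: "Tterm ord a (n - 1) j = ereal (of_int (ord (a (j + 1)) - ord (a (n - 1)))) + dd ord (- a j * a (j + 1))"
        unfolding Tterm_def using False by simp
      have "1 \<le> Tterm ord a n j" using Tn j by simp
      moreover have "Tterm ord a n j = ereal (of_int (ord (a (j + 1)))) + dd ord (- a j * a (j + 1))"
      proof -
        have jn: "n \<le> j" using False n3 by simp
        show ?thesis unfolding Tterm_def using jn Rn by (cases "j = n") auto
      qed
      ultimately have "ereal (of_int (ord (a (j + 1)))) + dd ord (- a j * a (j + 1)) \<ge> ereal (of_int 1)" by (simp add: one_ereal_def)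
      then have "ereal (of_int (1 - ord (a (j + 1)))) \<le> dd ord (- a j * a (j + 1))" by (simp only: er_ge_iff)
      moreover have "ereal (of_int (2*e - (ord (a (j+1)) - ord (a (n-1))))) \<le> ereal (of_int (1 - ord (a (j+1))))"
        using Rn1 epos by (simp add: e_def)
      ultimately show ?thesis unfolding T by (subst er_ge_iff) (rule order_trans)
    qed
  qed

  have prn: "pr a n (n + 1) = a n * a (n + 1)" using pr_Suc[of n n a] by (simp add: pr_def)
  define dn where "dn = dd ord (- a n * a (n + 1))"
  define Aset where "Aset = {dn, alpha ord a m (n - 1)} \<union> (if n + 1 = m then {} else {alpha ord a m (n + 1)})"
  have "dA ord a m (-1) n (n + 1) = Min Aset"
  proof -
    have "{dd ord (-1 * pr a n (n + 1))} \<union> (if n - 1 \<notin> {0, m} then {alpha ord a m (n - 1)} else {})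
        \<union> (if n + 1 \<notin> {0, m} then {alpha ord a m (n + 1)} else {}) = Aset"
      unfolding Aset_def dn_def prn using n3 mn by auto
    then show ?thesis unfolding dA_def by simp
  qed
  then have MinA: "Min Aset = ereal (of_int (1 - R'))" using dcond unfolding R'_def by simp
  have finA: "finite Aset" "Aset \<noteq> {}" unfolding Aset_def by auto
  have "Min Aset \<le> dn" by (rule Min_le[OF finA(1)]) (simp add: Aset_def)
  then have dn_ge: "ereal (of_int (1 - R')) \<le> dn" using MinA by simp
  have memA: "ereal (of_int (1 - R')) \<in> Aset" using Min_in[OF finA] MinA by simp
  have notan1: "ereal (of_int (1 - R')) \<noteq> alpha ord a m (n - 1)"
  proof
    assume "ereal (of_int (1 - R')) = alpha ord a m (n - 1)"
    then have "ereal (of_int (2 * e)) \<le> ereal (of_int (1 - R'))" using an1 by simp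
    then show False using R'lb by simp
  qed
  have dcases: "dn = ereal (of_int (1 - R')) \<or> (n + 1 \<noteq> m \<and> alpha ord a m (n + 1) = ereal (of_int (1 - R')))"
    using memA notan1 unfolding Aset_def by (auto split: if_splits)
  define w where "w = pr a 1 (n - 1) * pr b 1 (n - 1)"
  have nS: "n = Suc (n - 1)" using n3 by simp
  have pa: "pr a 1 n = pr a 1 (n - 1) * a n" using pr_Suc[of 1 "n - 1" a] nS by simp
  have pa1: "pr a 1 (n + 1) = pr a 1 (n - 1) * a n * a (n + 1)" using pr_Suc[of 1 n a] pa by simp
  have pb: "pr b 1 n = pr b 1 (n - 1) * b n" using pr_Suc[of 1 "n - 1" b] nS by simp
  have wnz: "w \<noteq> 0" unfolding w_def using anz bnz mn by (auto intro!: pr_nz)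
  define c1 where "c1 = 1 * pr a 1 n * pr b 1 n"
  define c2 where "c2 = -1 * pr a 1 (n + 1) * pr b 1 (n - 1)"
  have c1e: "c1 = w * (a n * b n)" unfolding c1_def w_def pa pb by (simp add: algebra_simps)
  have c2e: "c2 = (- a n * a (n + 1)) * w" unfolding c2_def w_def pa1 by (simp add: algebra_simps)
  have an0: "a n \<noteq> 0" "a (n + 1) \<noteq> 0" "b n \<noteq> 0" using anz bnz mn n3 by auto
  have c1nz: "c1 \<noteq> 0" unfolding c1e using wnz an0 by simp
  have c2nz: "c2 \<noteq> 0" unfolding c2e using wnz an0 by simp
  have oc1: "ord c1 = ord w + Sn" unfolding c1e Sn_def using wnz an0 Rn by (simp add: ord_mult)
  have oc2: "ord c2 = R' + ord w" unfolding c2e R'_def using wnz an0 Rn by (simp add: ord_mult)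
  define X where "X = dd ord c2"
  define D where "D = dd ord c1"
  define \<beta> where "\<beta> = alpha ord b n (n - 1)"
  define Lset where "Lset = {X} \<union> (if n + 1 = m then {} else {alpha ord a m (n + 1)}) \<union> {\<beta>}"
  have LHSe: "dAB ord a m b n (-1) (n + 1) (n - 1) = Min Lset"
  proof -
    have "{dd ord (-1 * pr a 1 (n + 1) * pr b 1 (n - 1))} \<union> (if n + 1 \<notin> {0, m} then {alpha ord a m (n + 1)} else {})
        \<union> (if n - 1 \<notin> {0, n} then {alpha ord b n (n - 1)} else {}) = Lset"
      unfolding Lset_def X_def c2_def \<beta>_def using n3 by auto
    then show ?thesis unfolding dAB_def by simp
  qed
  have RHSe: "dAB ord a m b n 1 n n = min D 1"
  proof -
    have "{dd ord (1 * pr a 1 n * pr b 1 n)} \<union> (if n \<notin> {0, m} then {alpha ord a m n} else {})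
        \<union> (if n \<notin> {0, n} then {alpha ord b n n} else {}) = {D, 1}"
      unfolding D_def c1_def using n3 mn alpha_n by auto
    then show ?thesis unfolding dAB_def by simp
  qed
  define mu where "mu = Min Lset"
  have finL: "finite Lset" unfolding Lset_def by auto
  have muX: "mu \<le> X" unfolding mu_def by (rule Min_le[OF finL]) (simp add: Lset_def)
  have mub: "mu \<le> \<beta>" unfolding mu_def by (rule Min_le[OF finL]) (simp add: Lset_def)
  have mua: "n + 1 \<noteq> m \<Longrightarrow> mu \<le> alpha ord a m (n + 1)" unfolding mu_def by (rule Min_le[OF finL]) (simp add: Lset_def)
  define L where "L = ereal (of_int (R' - Sn)) + mu"
  have LX: "L \<le> ereal (of_int (R' - Sn)) + X" unfolding L_def using muX by (rule add_left_mono)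
  have Lb: "L \<le> ereal (of_int (R' - ord (b j))) + dd ord (- b j * b (j + 1))" if j: "1 \<le> j" "j \<le> n - 1" for j
  proof -
    have "\<beta> \<le> Tterm ord b (n - 1) j" unfolding \<beta>_def by (rule alpha_le_T) (use j in auto)
    also have "Tterm ord b (n - 1) j = ereal (of_int (Sn - ord (b j))) + dd ord (- b j * b (j + 1))"
    proof -
      have "n - 1 + 1 = n" using n3 by simp
      then show ?thesis unfolding Tterm_def Sn_def using j by simp
    qed
    finally have "L \<le> ereal (of_int (R' - Sn)) + (ereal (of_int (Sn - ord (b j))) + dd ord (- b j * b (j + 1)))"
      unfolding L_def using mub by (metis add_left_mono order_trans)
    also have "\<dots> = ereal (of_int (R' - ord (b j))) + dd ord (- b j * b (j + 1))"
      by (cases "dd ord (- b j * b (j + 1))") auto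
    finally show ?thesis .
  qed
  have Lodd: "L \<le> ereal (of_int (R' - ord (b j)))" if j: "1 \<le> j" "j \<le> n - 1" "odd (ord (b (j + 1)) - ord (b j))" for j
  proof -
    have "b j \<noteq> 0" "b (j + 1) \<noteq> 0" using bnz j by auto
    moreover have "odd (ord (- b j * b (j + 1)))" using j(3) calculation by (simp add: ord_mult)
    ultimately have "dd ord (- b j * b (j + 1)) = 0" by (intro dd_odd) auto
    then show ?thesis using Lb[OF j(1,2)] by simp
  qed
  have D0: "0 \<le> D" unfolding D_def using dd_nonneg[OF c1nz] .
  have GoalA: "L \<le> min D 1" if h: "L \<le> ereal (of_int (1 - Sn))"
  proof (cases "1 \<le> Sn")
    case True
    then have "L \<le> 0" using h by (simp add: order_trans zero_ereal_def)
    then show ?thesis using D0 by (simp add: order_trans)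
  next
    case False
    then have "Sn = 0" using Sn0 by simp
    then have "even (ord (pr a 1 n * pr b 1 n))" using PL0[OF assms(1-7)] unfolding Sn_def by simp
    then have "1 \<le> D" unfolding D_def c1_def using dd_even c1nz c1_def by auto
    moreover have "L \<le> 1" using h \<open>Sn = 0\<close> by (simp add: one_ereal_def)
    ultimately show ?thesis by (simp add: order_trans)
  qed
  have goal: "L \<le> min D 1"
  proof (cases "dn = ereal (of_int (1 - R'))")
    case False
    then have "n + 1 \<noteq> m" "alpha ord a m (n + 1) = ereal (of_int (1 - R'))" using dcases by auto
    then have "L \<le> ereal (of_int (R' - Sn)) + ereal (of_int (1 - R'))" unfolding L_def using mua by (metis add_left_mono)
    then show ?thesis using GoalA by simp
  next
    case dnI: True
    have R'le1: "R' \<le> 1" using dnI dd_BF_nn[OF BFa, of n] mn n3 unfolding dn_def by (simp add: zero_ereal_def)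

    have Sj: "0 \<le> ord (b j)" if "1 \<le> j" "j \<le> n" "odd j" for j using P(3) that by auto
    have toMin: "L \<le> min D 1" if "L \<le> ereal (of_int x)" "x \<le> 0" for x
    proof -
      have "L \<le> 0" using that by (metis ereal_less_eq(3) of_int_le_0_iff order_trans zero_ereal_def)
      then show ?thesis using D0 by (simp add: order_trans)
    qed
    show ?thesis
    proof (cases "ereal (of_int (2 - R')) \<le> dd ord w")
      case True
      have "X \<le> ereal (of_int (1 - R'))"
      proof (rule ccontr)
        assume "\<not> X \<le> ereal (of_int (1 - R'))"
        then have "ereal (of_int (1 - R' + 1)) \<le> X" using isint_not_ge dd_isint[OF c2nz] unfolding X_def by blast
        then have x2: "ereal (of_int (2 - R')) \<le> X" by simp
        have "ereal (of_int (2 - R')) \<le> min X (dd ord w)" using x2 True by simp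
        also have "\<dots> \<le> dd ord (c2 * w)" unfolding X_def by (rule dd_dom[OF c2nz wnz])
        also have "c2 * w = (- a n * a (n + 1)) * w^2" unfolding c2e by (simp add: power2_eq_square algebra_simps)
        also have "dd ord \<dots> = dn" unfolding dn_def by (rule dd_sq) (use an0 wnz in simp_all)
        finally show False using dnI by simp
      qed
      then have "L \<le> ereal (of_int (R' - Sn)) + ereal (of_int (1 - R'))" using LX by (metis add_left_mono order_trans)
      then show ?thesis using GoalA by simp
    next
      case False
      define h where "h = (n - 1) div 2"
      have h2: "2 * h = n - 1" unfolding h_def using nodd by (auto elim!: oddE)
      have Wa: "\<forall>j. odd j \<and> j < 2 * h \<longrightarrow> ereal (of_int (2 - R')) \<le> dd ord (- a j * a (j + 1))"
      proof (intro allI impI)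
        fix j assume j: "odd j \<and> j < 2 * h"
        then have j1: "1 \<le> j" "j + 1 \<le> n - 1" "j \<le> n" "2 \<le> j + 1" "even (j + 1)" using h2 by auto presburger+
        have "ord (a j) = 0" using P(1) j j1 by auto
        moreover have "ord (a (j + 1)) = - 2 * e" using P(2) j1 unfolding e_def by auto
        ultimately have "ereal (of_int (2 - R')) \<le> ereal (of_int (ord (a j) - ord (a (j + 1))))" using R'lb by simp
        moreover have "ereal (of_int (ord (a j) - ord (a (j + 1)))) \<le> dd ord (- a j * a (j + 1))"
          using BF_B5[OF BFa, of j] j1 mn by auto
        ultimately show "ereal (of_int (2 - R')) \<le> dd ord (- a j * a (j + 1))" by (rule order_trans)
      qed
      have "\<not> (\<forall>j. odd j \<and> j < 2 * h \<longrightarrow> ereal (of_int (2 - R')) \<le> dd ord (- b j * b (j + 1)))"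
      proof
        assume Wb: "\<forall>j. odd j \<and> j < 2 * h \<longrightarrow> ereal (of_int (2 - R')) \<le> dd ord (- b j * b (j + 1))"
        have "ereal (of_int (2 - R')) \<le> dd ord (pr a 1 (2 * h) * pr b 1 (2 * h))"
          by (rule Wlem[OF BFa BFb]) (use h2 mn Wa Wb in auto)
        then show False using False h2 unfolding w_def by simp
      qed
      then obtain j0 where j0: "odd j0" "j0 < n - 1" "\<not> ereal (of_int (2 - R')) \<le> dd ord (- b j0 * b (j0 + 1))"
        using h2 by auto
      have j0r: "1 \<le> j0" "j0 + 1 \<le> n - 1" "j0 \<le> n" using j0 by auto presburger
      have bj0nz: "- b j0 * b (j0 + 1) \<noteq> 0" using bnz j0r by auto
      have dj0: "dd ord (- b j0 * b (j0 + 1)) \<le> ereal (of_int (1 - R'))"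
        using isint_not_le[OF dd_isint[OF bj0nz] j0(3)] by simp
      have Sj0: "0 \<le> ord (b j0)" using Sj j0 j0r by auto
      have Lj0: "L \<le> ereal (of_int (1 - ord (b j0)))"
      proof -
        have "L \<le> ereal (of_int (R' - ord (b j0))) + dd ord (- b j0 * b (j0 + 1))" using Lb j0r by auto
        also have "\<dots> \<le> ereal (of_int (R' - ord (b j0))) + ereal (of_int (1 - R'))" using dj0 by (rule add_left_mono)
        finally show ?thesis by simp
      qed
      have L1: "L \<le> 1"
      proof -
        have "ereal (of_int (1 - ord (b j0))) \<le> 1" using Sj0 by (simp add: one_ereal_def)
        then show ?thesis using Lj0 by (rule order_trans[rotated])
      qed
      show ?thesis
      proof (cases "1 \<le> D")
        case True then show ?thesis using L1 by (simp add: order_trans)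
      next
        case False
        then have "D < 1" by simp
        then have oddc1: "odd (ord c1)" using dd_lt1_odd[OF c1nz] unfolding D_def by simp
        show ?thesis
        proof (cases "even (R' - Sn)")
          case True
          then have "odd (ord c2)" using oddc1 oc1 oc2 by presburger
          then have "X = 0" unfolding X_def using dd_odd[OF c2nz] by simp
          then have "L \<le> ereal (of_int (R' - Sn))" using LX by simp
          moreover have "R' - Sn \<le> 0" using True R'le1 Sn0 by presburger
          ultimately show ?thesis by (rule toMin)
        next
          case odd: False
          show ?thesis
          proof (cases "1 \<le> ord (b j0)")
            case True then show ?thesis using Lj0 toMin[of "1 - ord (b j0)"] by simp
          next
            case False
            then have S0: "ord (b j0) = 0" using Sj0 by simp
            have Rpar: "R' = 1 \<or> (R' \<le> 0 \<and> even R')"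
            proof (cases "R' < 0")
              case True
              then have "even (ord (a (n + 1)) - ord (a n))" using BF_B4[OF BFa, of n] mn n3 Rn unfolding R'_def by auto
              then show ?thesis using True Rn unfolding R'_def by simp
            next
              case False
              then have "R' = 0 \<or> R' = 1" using R'le1 by auto
              then show ?thesis by auto
            qed
            define p where "p = j0 + 1"
            have p: "1 \<le> p" "p \<le> n" "even p" using j0 j0r unfolding p_def by auto
            have G: "\<exists>j. p \<le> j \<and> j < n \<and> odd (ord (b (j + 1)) - ord (b j)) \<and> (even (ord (b j)) = even (ord (b p))) \<and>
                   (ord (b p) \<le> ord (b j) \<or> odd (j - p))"
              if "even (ord (b n)) \<noteq> even (ord (b p))" using G_lemma[OF BFb p(1) p(2)] p that by auto
            have jodd: "odd j" if "odd (j - p)" "p \<le> j" for j using that p(3) by presburger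
            show ?thesis
            proof (cases "R' = 1")
              case R1: True
              then have Sne: "even Sn" using odd by presburger
              have "dd ord (- b j0 * b (j0 + 1)) < 1" using dj0 R1 by (simp add: order_le_less_trans)
              then have "odd (ord (- b j0 * b (j0 + 1)))" using dd_lt1_odd[OF bj0nz] by simp
              then have Sp_odd: "odd (ord (b p))" using S0 bnz j0r unfolding p_def by (simp add: ord_mult)
              have Sp1: "1 \<le> ord (b p)"
              proof -
                have "\<not> ord (b p) < ord (b j0)"
                proof
                  assume "ord (b p) < ord (b j0)"
                  then have "even (ord (b (j0 + 1)) - ord (b j0))" using BF_B4[OF BFb, of j0] j0r unfolding p_def by auto
                  then show False using Sp_odd S0 unfolding p_def by simp
                qed
                then show ?thesis using S0 Sp_odd by presburger
              qed
              obtain j where j: "p \<le> j" "j < n" "odd (ord (b (j + 1)) - ord (b j))" "even (ord (b j)) = even (ord (b p))"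
                "ord (b p) \<le> ord (b j) \<or> odd (j - p)"
                using G Sne Sp_odd unfolding Sn_def by auto
              have "1 \<le> ord (b j)"
              proof (cases "ord (b p) \<le> ord (b j)")
                case True then show ?thesis using Sp1 by simp
              next
                case False
                then have "odd j" using j(5) jodd j(1) by blast
                then have "0 \<le> ord (b j)" using Sj[of j] j p by auto
                then show ?thesis using j(4) Sp_odd by presburger
              qed
              moreover have "L \<le> ereal (of_int (R' - ord (b j)))" using Lodd[of j] j p by auto
              ultimately show ?thesis using R1 toMin[of "R' - ord (b j)"] by simp
            next
              case False
              then have R0: "R' \<le> 0" "even R'" using Rpar by auto
              then have Sno: "odd Sn" using odd by presburger
              show ?thesis
              proof (cases "odd (ord (b p))")
                case True
                have "L \<le> ereal (of_int (R' - ord (b j0)))" using Lodd[of j0] j0r True S0 unfolding p_def by auto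
                then show ?thesis using S0 R0 toMin[of "R' - ord (b j0)"] by simp
              next
                case False
                have "ereal (of_int (ord (b j0) - ord (b (j0 + 1)))) \<le> dd ord (- b j0 * b (j0 + 1))"
                  using BF_B5[OF BFb, of j0] j0r by auto
                then have "ereal (of_int (ord (b j0) - ord (b (j0 + 1)))) \<le> ereal (of_int (1 - R'))"
                  using dj0 by (rule order_trans)
                then have "R' - 1 \<le> ord (b p)" using S0 unfolding p_def by simp
                then have SpR: "R' \<le> ord (b p)" using False R0 by presburger
                obtain j where j: "p \<le> j" "j < n" "odd (ord (b (j + 1)) - ord (b j))" "even (ord (b j)) = even (ord (b p))"
                  "ord (b p) \<le> ord (b j) \<or> odd (j - p)"
                  using G Sno False unfolding Sn_def by auto
                have "R' \<le> ord (b j)"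
                proof (cases "ord (b p) \<le> ord (b j)")
                  case True then show ?thesis using SpR by simp
                next
                  case False
                  then have "odd j" using j(5) jodd j(1) by blast
                  then have "0 \<le> ord (b j)" using Sj[of j] j p by auto
                  then show ?thesis using R0 by simp
                qed
                moreover have "L \<le> ereal (of_int (R' - ord (b j)))" using Lodd[of j] j p by auto
                ultimately show ?thesis using toMin[of "R' - ord (b j)"] by simp
              qed
            qed
          qed
        qed
      qed
    qed
  qed
  show ?thesis using goal unfolding L_def mu_def LHSe RHSe R'_def Sn_def .
qed

end

theorem lemma2p11:
  fixes ord :: "'a::field \<Rightarrow> int"
    and G :: "nat \<Rightarrow> nat \<Rightarrow> 'a" and k :: nat and M :: "(nat \<Rightarrow> 'a) set" and a :: "nat \<Rightarrow> 'a" and m :: nat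
    and H :: "nat \<Rightarrow> nat \<Rightarrow> 'a" and l :: nat and N :: "(nat \<Rightarrow> 'a) set" and b :: "nat \<Rightarrow> 'a" and n :: nat
  assumes F: "dyadic_local_field ord"
    and VM: "quad_space G k" and LM: "is_lattice ord k M" and IM: "integral ord G k M"
    and BM: "good_bong_repr ord G k M a m"
    and VN: "quad_space H l" and LN: "is_lattice ord l N" and IN: "integral ord H l N"
    and BN: "good_bong_repr ord H l N b n"
    and n3: "n \<ge> 3" and nodd: "odd n" and mn: "m \<ge> n + 1"
    and Rn1: "ord (a (n - 1)) = - 2 * eram ord"
    and Rn: "ord (a n) = 0"
    and alpha_n: "alpha ord a m n = 1"
    and dcond: "dA ord a m (-1) n (n + 1) = ereal (of_int (1 - ord (a (n + 1))))"
  shows "ereal (of_int (ord (a (n + 1)) - ord (b n))) + dAB ord a m b n (-1) (n + 1) (n - 1)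
           \<le> dAB ord a m b n 1 n n"
proof -
  interpret dlf ord by (rule dlf.intro) (rule F)
  have BFa: "BF a m" by (rule BF_intro[OF VM LM IM BM])
  have BFb: "BF b n" by (rule BF_intro[OF VN LN IN BN])
  show ?thesis by (rule main[OF BFa BFb n3 nodd mn Rn1 Rn alpha_n dcond])
qed

end
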